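(* Let $n\ge 2$ and let $f:\mathbb{R}^n\to\mathbb{R}$, $f(x)=\sum_{r,q=1}^n a_{rq}x_rx_q^2$ with $a_{rq}=1$ if $r\ge q$ and $a_{rq}=0$ if $r<q$. Let $M=\mathrm{graph}(f)\subset\mathbb{R}^{n+1}$ with induced metric $g$, $p$ the origin, and let $g(t)$, $t\in[0,T)$, be a smooth solution of the Ricci flow $\partial_t g=-2\,\mathrm{Ric}(g)$ on a neighborhood of $p$ in $M$ with $g(0)=g$. Then at $(t,x)=(0,p)$: $g_{ij}=\delta_{ij}$, $Rm=0$, $\partial_t R_{ijkl}=0$ whenever $\{i,j\}\ne\{k,l\}$, and for $1\le i<j\le n$, $$\partial_t R_{ijij}(0,p)=-8\,(n-j+2)<0 .$$ In particular $\partial_t Rm(0,p)\neq 0$.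
   Context: $M$ is identified with $\mathbb{R}^n$ via $x\mapsto (x,f(x))$, giving global coordinates $x_1,\dots,x_n$ on $M$; components of tensors are taken with respect to the coordinate fields $\partial_i$. The curvature tensor convention is the one for which the Gauss equation of the graph reads $R_{ijkl}=h_{il}h_{jk}-h_{ik}h_{jl}$, where $h_{ij}=\partial_i\partial_j f/\sqrt{1+|\nabla f|^2}$ is the second fundamental form; equivalently, for $g$-orthonormal $e_i,e_j$ the sectional curvature of their span is $R_{ijji}$. *)

theory Defs
  imports "HOL-Analysis.Analysis"
begin

text \<open>Coordinates of R^n are indexed by a finite linearly ordered type 'n;
  the coordinate index i has numerical label pos i in {1..n}.\<close>

definition pos :: "'n::{finite,linorder} \<Rightarrow> nat" where
  "pos i = card {k. k \<le> i}"

definition fgraph :: "real^'n::{finite,linorder} \<Rightarrow> real" where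
  "fgraph x = (\<Sum>r\<in>UNIV. \<Sum>q\<in>UNIV.
      (if pos r \<ge> pos q then 1 else 0) * x$r * (x$q)^2)"

definition pd :: "'n::finite \<Rightarrow> (real^'n \<Rightarrow> 'b::real_normed_vector) \<Rightarrow> real^'n \<Rightarrow> 'b" where
  "pd k F x = vector_derivative (\<lambda>s. F (x + s *\<^sub>R axis k 1)) (at 0)"

definition graph_emb :: "(real^'n::finite \<Rightarrow> real) \<Rightarrow> real^'n \<Rightarrow> (real^'n) \<times> real" where
  "graph_emb f x = (x, f x)"

definition induced_metric :: "(real^'n::finite \<Rightarrow> real) \<Rightarrow> real^'n \<Rightarrow> real^'n^'n" where
  "induced_metric f x = (\<chi> i j. inner (pd i (graph_emb f) x) (pd j (graph_emb f) x))"

definition Gam :: "(real^'n::finite \<Rightarrow> real^'n^'n) \<Rightarrow> real^'n \<Rightarrow> 'n \<Rightarrow> 'n \<Rightarrow> 'n \<Rightarrow> real" where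
  "Gam G x m i j = (1/2) * (\<Sum>l\<in>UNIV. matrix_inv (G x) $ m $ l *
      (pd i (\<lambda>y. G y $ j $ l) x + pd j (\<lambda>y. G y $ i $ l) x - pd l (\<lambda>y. G y $ i $ j) x))"

text \<open>R(d_i,d_j)d_k = Rup i j k m d_m, with R(X,Y)Z = nabla_X nabla_Y Z - nabla_Y nabla_X Z - nabla_[X,Y] Z.\<close>
definition Rup :: "(real^'n::finite \<Rightarrow> real^'n^'n) \<Rightarrow> real^'n \<Rightarrow> 'n \<Rightarrow> 'n \<Rightarrow> 'n \<Rightarrow> 'n \<Rightarrow> real" where
  "Rup G x i j k m = pd i (\<lambda>y. Gam G y m j k) x - pd j (\<lambda>y. Gam G y m i k) x
     + (\<Sum>p\<in>UNIV. Gam G x p j k * Gam G x m i p - Gam G x p i k * Gam G x m j p)"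

text \<open>R_ijkl = g(R(d_i,d_j)d_k, d_l); sectional curvature of orthonormal e_i,e_j is R_ijji.\<close>
definition Rm :: "(real^'n::finite \<Rightarrow> real^'n^'n) \<Rightarrow> 'n \<Rightarrow> 'n \<Rightarrow> 'n \<Rightarrow> 'n \<Rightarrow> real^'n \<Rightarrow> real" where
  "Rm G i j k l x = (\<Sum>m\<in>UNIV. G x $ l $ m * Rup G x i j k m)"

definition Ric :: "(real^'n::finite \<Rightarrow> real^'n^'n) \<Rightarrow> real^'n \<Rightarrow> 'n \<Rightarrow> 'n \<Rightarrow> real" where
  "Ric G x j k = (\<Sum>i\<in>UNIV. Rup G x i j k i)"

primrec Ck :: "nat \<Rightarrow> 'a::euclidean_space set \<Rightarrow> ('a \<Rightarrow> real) \<Rightarrow> bool" where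
  "Ck 0 S F = continuous_on S F"
| "Ck (Suc k) S F = (\<exists>F'. (\<forall>x\<in>S. (F has_derivative F' x) (at x within S))
                          \<and> (\<forall>v. Ck k S (\<lambda>x. F' x v)))"

definition smooth_on :: "'a::euclidean_space set \<Rightarrow> ('a \<Rightarrow> real) \<Rightarrow> bool" where
  "smooth_on S F = (\<forall>k. Ck k S F)"

definition ricci_flow_solution ::
  "real \<Rightarrow> (real^'n::finite) set \<Rightarrow> (real \<Rightarrow> real^'n \<Rightarrow> real^'n^'n) \<Rightarrow> (real^'n \<Rightarrow> real^'n^'n) \<Rightarrow> bool" where
  "ricci_flow_solution T U g g0 \<longleftrightarrow>
     (\<forall>i j. smooth_on ({0..<T} \<times> U) (\<lambda>(t,x). g t x $ i $ j)) \<and>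
     (\<forall>t\<in>{0..<T}. \<forall>x\<in>U. (\<forall>i j. g t x $ i $ j = g t x $ j $ i) \<and>
                            (\<forall>v. v \<noteq> 0 \<longrightarrow> inner v (g t x *v v) > 0)) \<and>
     (\<forall>x\<in>U. g 0 x = g0 x) \<and>
     (\<forall>t\<in>{0..<T}. \<forall>x\<in>U. \<forall>i j.
        ((\<lambda>s. g s x $ i $ j) has_real_derivative (-2 * Ric (g t) x i j)) (at t within {0..<T}))"

end

theory Submission
  imports Defs
begin

lemma pd_eqI:
  "((\<lambda>s. F (x + s *\<^sub>R axis k 1)) has_vector_derivative D) (at 0) \<Longrightarrow> pd k F x = D"
  unfolding pd_def by (rule vector_derivative_at)

lemma pd_eqI_real:
  fixes F :: "real^'n::finite \<Rightarrow> real"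
  shows "((\<lambda>s. F (x + s *\<^sub>R axis k 1)) has_real_derivative D) (at 0) \<Longrightarrow> pd k F x = D"
  by (rule pd_eqI) (simp add: has_real_derivative_iff_has_vector_derivative)

lemma line_has_derivative:
  assumes "(F has_derivative F') (at x)"
  shows "((\<lambda>s. F (x + s *\<^sub>R axis k 1)) has_vector_derivative F' (axis k 1)) (at 0)"
proof -
  have l: "((\<lambda>s::real. x + s *\<^sub>R axis k 1) has_derivative (\<lambda>s. s *\<^sub>R axis k 1)) (at 0)"
    by (auto intro!: derivative_eq_intros)
  have F0: "(F has_derivative F') (at (x + 0 *\<^sub>R axis k 1))" using assms by simp
  have "((\<lambda>s. F (x + s *\<^sub>R axis k 1)) has_derivative (\<lambda>s. F' (s *\<^sub>R axis k 1))) (at 0)"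
    using has_derivative_compose[OF l F0] by (simp add: o_def)
  moreover have "(\<lambda>s. F' (s *\<^sub>R axis k 1)) = (\<lambda>s. s *\<^sub>R F' (axis k 1))"
    using has_derivative_linear[OF assms] by (simp add: linear_scale)
  ultimately show ?thesis by (simp add: has_vector_derivative_def)
qed

lemma pd_has_derivative:
  assumes "(F has_derivative F') (at x)"
  shows "pd k F x = F' (axis k 1)"
  by (rule pd_eqI[OF line_has_derivative[OF assms]])

lemma pd_line_real:
  fixes F :: "real^'n::finite \<Rightarrow> real"
  assumes "F differentiable (at x)"
  shows "((\<lambda>s. F (x + s *\<^sub>R axis k 1)) has_real_derivative pd k F x) (at 0)"
proof -
  obtain F' where F': "(F has_derivative F') (at x)" using assms by (auto simp: differentiable_def)
  show ?thesis using line_has_derivative[OF F', of k] pd_has_derivative[OF F', of k]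
    by (simp add: has_real_derivative_iff_has_vector_derivative)
qed

lemma pd_local:
  assumes "open V" "x \<in> V" "\<And>y. y \<in> V \<Longrightarrow> F y = G y"
  shows "pd k F x = pd k G x"
proof -
  let ?W = "(\<lambda>s::real. x + s *\<^sub>R axis k 1) -` V"
  have oW: "open ?W"
    by (rule open_vimage[OF assms(1)]) (auto intro!: continuous_intros)
  have W0: "0 \<in> ?W" using assms by simp
  have eq: "\<And>s. s \<in> ?W \<Longrightarrow> F (x + s *\<^sub>R axis k 1) = G (x + s *\<^sub>R axis k 1)"
    using assms(3) by auto
  have "\<And>D. ((\<lambda>s. F (x + s *\<^sub>R axis k 1)) has_vector_derivative D) (at 0) \<longleftrightarrow>
             ((\<lambda>s. G (x + s *\<^sub>R axis k 1)) has_vector_derivative D) (at 0)"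
  proof
    fix D assume "((\<lambda>s. F (x + s *\<^sub>R axis k 1)) has_vector_derivative D) (at 0)"
    then show "((\<lambda>s. G (x + s *\<^sub>R axis k 1)) has_vector_derivative D) (at 0)"
      by (rule has_vector_derivative_transform_within_open[OF _ oW W0]) (use eq in auto)
  next
    fix D assume "((\<lambda>s. G (x + s *\<^sub>R axis k 1)) has_vector_derivative D) (at 0)"
    then show "((\<lambda>s. F (x + s *\<^sub>R axis k 1)) has_vector_derivative D) (at 0)"
      by (rule has_vector_derivative_transform_within_open[OF _ oW W0]) (use eq in auto)
  qed
  then show ?thesis unfolding pd_def vector_derivative_def by simp
qed

lemma pd_add:
  fixes F G :: "real^'n::finite \<Rightarrow> real"
  assumes "F differentiable (at x)" "G differentiable (at x)"
  shows "pd k (\<lambda>y. F y + G y) x = pd k F x + pd k G x"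
  by (rule pd_eqI_real) (auto intro!: derivative_eq_intros pd_line_real assms)

lemma pd_diff:
  fixes F G :: "real^'n::finite \<Rightarrow> real"
  assumes "F differentiable (at x)" "G differentiable (at x)"
  shows "pd k (\<lambda>y. F y - G y) x = pd k F x - pd k G x"
  by (rule pd_eqI_real) (auto intro!: derivative_eq_intros pd_line_real assms)

lemma pd_mult:
  fixes F G :: "real^'n::finite \<Rightarrow> real"
  assumes "F differentiable (at x)" "G differentiable (at x)"
  shows "pd k (\<lambda>y. F y * G y) x = pd k F x * G x + F x * pd k G x"
  by (rule pd_eqI_real) (auto intro!: derivative_eq_intros pd_line_real assms)

lemma pd_divide:
  fixes F G :: "real^'n::finite \<Rightarrow> real"
  assumes "F differentiable (at x)" "G differentiable (at x)" "G x \<noteq> 0"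
  shows "pd k (\<lambda>y. F y / G y) x = (pd k F x * G x - F x * pd k G x) / (G x * G x)"
proof (rule pd_eqI_real)
  have "G (x + 0 *\<^sub>R axis k 1) \<noteq> 0" using assms(3) by simp
  from DERIV_divide[OF pd_line_real[OF assms(1)] pd_line_real[OF assms(2)] this]
  show "((\<lambda>s. F (x + s *\<^sub>R axis k 1) / G (x + s *\<^sub>R axis k 1)) has_real_derivative
     (pd k F x * G x - F x * pd k G x) / (G x * G x)) (at 0)" by simp
qed

lemma pd_const: "pd k (\<lambda>y. c) x = (0::real)"
  by (rule pd_eqI_real) (auto intro!: derivative_eq_intros)

lemma pd_coord: "pd k (\<lambda>y::real^'n::finite. y $ i) x = (if i = k then 1 else 0)"
  by (rule pd_eqI_real) (auto intro!: derivative_eq_intros simp: axis_def)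

lemma pd_sum:
  fixes F :: "'a \<Rightarrow> real^'n::finite \<Rightarrow> real"
  assumes "finite A" "\<And>a. a \<in> A \<Longrightarrow> F a differentiable (at x)"
  shows "pd k (\<lambda>y. \<Sum>a\<in>A. F a y) x = (\<Sum>a\<in>A. pd k (F a) x)"
  by (rule pd_eqI_real) (auto intro!: derivative_eq_intros pd_line_real assms)

section \<open>Smooth functions everywhere\<close>

fun Dk :: "nat \<Rightarrow> (real^'n::finite \<Rightarrow> real) \<Rightarrow> bool" where
  "Dk 0 F = True"
| "Dk (Suc k) F = ((\<forall>x. F differentiable (at x)) \<and> (\<forall>d. Dk k (pd d F)))"

definition Sm :: "(real^'n::finite \<Rightarrow> real) \<Rightarrow> bool" where
  "Sm F = (\<forall>k. Dk k F)"

lemma Dk_mono: "Dk (Suc k) F \<Longrightarrow> Dk k F"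
  by (induction k arbitrary: F) auto

lemma Dk_const: "Dk k (\<lambda>y. c)"
proof (induction k arbitrary: c)
  case (Suc k)
  have "pd d (\<lambda>y::real^'a. c) = (\<lambda>y. 0)" for d by (rule ext) (simp add: pd_const)
  then show ?case using Suc by simp
qed simp

lemma Dk_coord: "Dk k (\<lambda>y. y $ i)"
proof (cases k)
  case (Suc k')
  have "pd d (\<lambda>y::real^'a. y $ i) = (\<lambda>y. if i = d then 1 else 0)" for d by (rule ext) (simp add: pd_coord)
  moreover have "(\<lambda>y::real^'a. y $ i) differentiable (at x)" for x
    by (rule bounded_linear_imp_differentiable) (rule bounded_linear_vec_nth)
  ultimately show ?thesis using Suc by (simp add: Dk_const)
qed simp

lemma Dk_add: "Dk k F \<Longrightarrow> Dk k G \<Longrightarrow> Dk k (\<lambda>y. F y + G y)"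
proof (induction k arbitrary: F G)
  case (Suc k)
  have "pd d (\<lambda>y. F y + G y) = (\<lambda>y. pd d F y + pd d G y)" for d
    using Suc.prems by (intro ext pd_add) auto
  then show ?case using Suc by auto
qed simp

lemma Dk_diff: "Dk k F \<Longrightarrow> Dk k G \<Longrightarrow> Dk k (\<lambda>y. F y - G y)"
proof (induction k arbitrary: F G)
  case (Suc k)
  have "pd d (\<lambda>y. F y - G y) = (\<lambda>y. pd d F y - pd d G y)" for d
    using Suc.prems by (intro ext pd_diff) auto
  then show ?case using Suc by auto
qed simp

lemma Dk_mult: "Dk k F \<Longrightarrow> Dk k G \<Longrightarrow> Dk k (\<lambda>y. F y * G y)"
proof (induction k arbitrary: F G)
  case (Suc k)
  have "pd d (\<lambda>y. F y * G y) = (\<lambda>y. pd d F y * G y + F y * pd d G y)" for d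
    using Suc.prems by (intro ext pd_mult) auto
  moreover have "Dk k (\<lambda>y. pd d F y * G y + F y * pd d G y)" for d
    using Suc Dk_mono[of k F] Dk_mono[of k G] by (intro Dk_add) auto
  ultimately show ?case using Suc.prems by auto
qed simp

lemma Dk_divide: "Dk k F \<Longrightarrow> Dk k G \<Longrightarrow> (\<And>y. G y \<noteq> 0) \<Longrightarrow> Dk k (\<lambda>y. F y / G y)"
proof (induction k arbitrary: F G)
  case (Suc k)
  have "pd d (\<lambda>y. F y / G y) = (\<lambda>y. (pd d F y * G y - F y * pd d G y) / (G y * G y))" for d
    using Suc.prems by (intro ext pd_divide) auto
  moreover have "Dk k (\<lambda>y. (pd d F y * G y - F y * pd d G y) / (G y * G y))" for d
    using Suc.prems Dk_mono[of k F] Dk_mono[of k G]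
    by (intro Suc.IH Dk_diff Dk_mult) auto
  ultimately show ?case using Suc.prems by (auto intro!: differentiable_divide)
qed simp

lemma Dk_sum: "finite A \<Longrightarrow> (\<And>a. a \<in> A \<Longrightarrow> Dk k (F a)) \<Longrightarrow> Dk k (\<lambda>y. \<Sum>a\<in>A. F a y)"
  by (induction A rule: finite_induct) (auto intro!: Dk_add simp: Dk_const)

lemma Sm_const[intro]: "Sm (\<lambda>y. c)" by (simp add: Sm_def Dk_const)
lemma Sm_coord[intro]: "Sm (\<lambda>y. y $ i)" by (simp add: Sm_def Dk_coord)
lemma Sm_add[intro]: "Sm F \<Longrightarrow> Sm G \<Longrightarrow> Sm (\<lambda>y. F y + G y)" by (simp add: Sm_def Dk_add)
lemma Sm_diff[intro]: "Sm F \<Longrightarrow> Sm G \<Longrightarrow> Sm (\<lambda>y. F y - G y)" by (simp add: Sm_def Dk_diff)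
lemma Sm_mult[intro]: "Sm F \<Longrightarrow> Sm G \<Longrightarrow> Sm (\<lambda>y. F y * G y)" by (simp add: Sm_def Dk_mult)
lemma Sm_divide[intro]: "Sm F \<Longrightarrow> Sm G \<Longrightarrow> (\<And>y. G y \<noteq> 0) \<Longrightarrow> Sm (\<lambda>y. F y / G y)"
  by (simp add: Sm_def Dk_divide)
lemma Sm_sum[intro]: "finite A \<Longrightarrow> (\<And>a. a \<in> A \<Longrightarrow> Sm (F a)) \<Longrightarrow> Sm (\<lambda>y. \<Sum>a\<in>A. F a y)"
  by (simp add: Sm_def Dk_sum)
lemma Sm_pd[intro]: "Sm F \<Longrightarrow> Sm (pd d F)"
  unfolding Sm_def by (metis Dk.simps(2))
lemma Sm_diffble[intro]: "Sm F \<Longrightarrow> F differentiable (at x)"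
  unfolding Sm_def by (metis Dk.simps(2))
lemma Sm_eta: "Sm F \<Longrightarrow> Sm (\<lambda>y. F y)" by simp

section \<open>Iterated partial derivatives and vanishing order\<close>

fun iterpd :: "'n list \<Rightarrow> (real^'n::finite \<Rightarrow> real) \<Rightarrow> real^'n \<Rightarrow> real" where
  "iterpd [] F = F"
| "iterpd (d#ds) F = iterpd ds (pd d F)"

lemma pd_add_fun: "Sm F \<Longrightarrow> Sm G \<Longrightarrow> pd d (\<lambda>y. F y + G y) = (\<lambda>y. pd d F y + pd d G y)"
  by (intro ext pd_add) auto
lemma pd_diff_fun: "Sm F \<Longrightarrow> Sm G \<Longrightarrow> pd d (\<lambda>y. F y - G y) = (\<lambda>y. pd d F y - pd d G y)"
  by (intro ext pd_diff) auto
lemma pd_mult_fun: "Sm F \<Longrightarrow> Sm G \<Longrightarrow> pd d (\<lambda>y. F y * G y) = (\<lambda>y. pd d F y * G y + F y * pd d G y)"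
  by (intro ext pd_mult) auto
lemma pd_sum_fun: "finite A \<Longrightarrow> (\<And>a. a \<in> A \<Longrightarrow> Sm (F a)) \<Longrightarrow>
   pd d (\<lambda>y. \<Sum>a\<in>A. F a y) = (\<lambda>y. \<Sum>a\<in>A. pd d (F a) y)"
  by (intro ext pd_sum) auto
lemma pd_const_fun: "pd d (\<lambda>y. c) = (\<lambda>y. 0::real)"
  by (intro ext pd_const)

lemma iterpd_add: "Sm F \<Longrightarrow> Sm G \<Longrightarrow> iterpd ds (\<lambda>y. F y + G y) = (\<lambda>y. iterpd ds F y + iterpd ds G y)"
  by (induction ds arbitrary: F G) (auto simp: pd_add_fun)
lemma iterpd_diff: "Sm F \<Longrightarrow> Sm G \<Longrightarrow> iterpd ds (\<lambda>y. F y - G y) = (\<lambda>y. iterpd ds F y - iterpd ds G y)"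
  by (induction ds arbitrary: F G) (auto simp: pd_diff_fun)
lemma iterpd_sum: "finite A \<Longrightarrow> (\<And>a. a \<in> A \<Longrightarrow> Sm (F a)) \<Longrightarrow>
    iterpd ds (\<lambda>y. \<Sum>a\<in>A. F a y) = (\<lambda>y. \<Sum>a\<in>A. iterpd ds (F a) y)"
proof (induction ds arbitrary: F)
  case (Cons d ds)
  show ?case using Cons.prems by (simp add: pd_sum_fun Cons.IH Sm_pd)
qed simp
lemma iterpd_const: "iterpd ds (\<lambda>y. c) = (\<lambda>y. if ds = [] then c else 0)"
  by (induction ds arbitrary: c) (auto simp: pd_const_fun)
lemma iterpd_cmult: "Sm F \<Longrightarrow> iterpd ds (\<lambda>y. c * F y) = (\<lambda>y. c * iterpd ds F y)"
proof (induction ds arbitrary: F)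
  case (Cons d ds)
  have "pd d (\<lambda>y. c * F y) = (\<lambda>y. c * pd d F y)"
    using Cons.prems by (subst pd_mult_fun) (auto simp: pd_const_fun)
  then show ?case using Cons by (simp add: Sm_pd)
qed simp
lemma Sm_iterpd[intro]: "Sm F \<Longrightarrow> Sm (iterpd ds F)"
  by (induction ds arbitrary: F) auto

definition van :: "nat \<Rightarrow> (real^'n::finite \<Rightarrow> real) \<Rightarrow> bool" where
  "van k F = (\<forall>ds. length ds < k \<longrightarrow> iterpd ds F 0 = 0)"

lemma van_pd: "van k F \<Longrightarrow> van (k - 1) (pd d F)"
  unfolding van_def
proof (intro allI impI)
  fix ds :: "'a list" assume h: "\<forall>ds. length ds < k \<longrightarrow> iterpd ds F 0 = 0" "length ds < k - 1"
  then have "iterpd (d#ds) F 0 = 0" using h(1)[rule_format, of "d#ds"] by simp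
  then show "iterpd ds (pd d F) 0 = 0" by simp
qed

lemma van_mono: "van k F \<Longrightarrow> j \<le> k \<Longrightarrow> van j F"
  unfolding van_def by auto

lemma van_0[simp]: "van 0 F" by (simp add: van_def)

lemma van_add: "Sm F \<Longrightarrow> Sm G \<Longrightarrow> van k F \<Longrightarrow> van k G \<Longrightarrow> van k (\<lambda>y. F y + G y)"
  by (simp add: van_def iterpd_add)
lemma van_diff: "Sm F \<Longrightarrow> Sm G \<Longrightarrow> van k F \<Longrightarrow> van k G \<Longrightarrow> van k (\<lambda>y. F y - G y)"
  by (simp add: van_def iterpd_diff)
lemma van_sum: "finite A \<Longrightarrow> (\<And>a. a \<in> A \<Longrightarrow> Sm (F a)) \<Longrightarrow> (\<And>a. a \<in> A \<Longrightarrow> van k (F a)) \<Longrightarrow>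
   van k (\<lambda>y. \<Sum>a\<in>A. F a y)"
  by (simp add: van_def iterpd_sum)
lemma van_const0: "van k (\<lambda>y. 0)"
  by (simp add: van_def iterpd_const)

lemma van_mult_aux:
  "\<And>a b F G. Sm F \<Longrightarrow> Sm G \<Longrightarrow> van a F \<Longrightarrow> van b G \<Longrightarrow> length ds < a + b \<Longrightarrow>
    iterpd ds (\<lambda>y. F y * G y) 0 = 0"
proof (induction ds)
  case Nil
  then have "a > 0 \<or> b > 0" by simp
  then have "F 0 = 0 \<or> G 0 = 0"
    using Nil.prems unfolding van_def by (metis iterpd.simps(1) list.size(3))
  then show ?case by auto
next
  case (Cons d ds)
  have e: "iterpd (d#ds) (\<lambda>y. F y * G y) 0 =
      iterpd ds (\<lambda>y. pd d F y * G y) 0 + iterpd ds (\<lambda>y. F y * pd d G y) 0"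
    using Cons.prems by (simp add: pd_mult_fun iterpd_add Sm_mult Sm_pd)
  have 1: "iterpd ds (\<lambda>y. pd d F y * G y) 0 = 0"
    by (rule Cons.IH[of "pd d F" G "a - 1" b]) (use Cons.prems van_pd in auto)
  have 2: "iterpd ds (\<lambda>y. F y * pd d G y) 0 = 0"
    by (rule Cons.IH[of F "pd d G" a "b - 1"]) (use Cons.prems van_pd in auto)
  show ?case using e 1 2 by simp
qed

lemma van_mult: "Sm F \<Longrightarrow> Sm G \<Longrightarrow> van a F \<Longrightarrow> van b G \<Longrightarrow> van (a + b) (\<lambda>y. F y * G y)"
  unfolding van_def[of "a+b"] using van_mult_aux by blast

lemma van_Suc:
  assumes "F 0 = 0" "\<And>d. van k (pd d F)" shows "van (Suc k) F"
  unfolding van_def[of "Suc k"]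
proof (intro allI impI)
  fix ds :: "'a list" assume l: "length ds < Suc k"
  show "iterpd ds F 0 = 0"
  proof (cases ds)
    case (Cons d ds')
    then show ?thesis using assms(2)[of d] l by (simp add: van_def)
  qed (use assms in simp)
qed

lemma van_eq:
  assumes "Sm F" "Sm G" "van k (\<lambda>y. F y - G y)" "length ds < k"
  shows "iterpd ds F 0 = iterpd ds G 0"
  using assms unfolding van_def by (auto simp: iterpd_diff)


lemma pos_le_iff: "pos (q::'n::{finite,linorder}) \<le> pos r \<longleftrightarrow> q \<le> r"
proof
  assume "q \<le> r" then show "pos q \<le> pos r"
    unfolding pos_def by (intro card_mono) auto
next
  assume h: "pos q \<le> pos r"
  show "q \<le> r"
  proof (rule ccontr)
    assume "\<not> q \<le> r" then have "r < q" by simp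
    then have "{k. k \<le> r} \<subseteq> {k. k \<le> q}" "q \<notin> {k. k \<le> r}" by auto
    then have "{k. k \<le> r} \<subset> {k. k \<le> q}" by auto
    then have "pos r < pos q" unfolding pos_def by (intro psubset_card_mono) auto
    then show False using h by simp
  qed
qed

lemma pos_less_iff: "pos (q::'n::{finite,linorder}) < pos r \<longleftrightarrow> q < r"
  by (meson linorder_not_le pos_le_iff)

definition AA :: "'n::{finite,linorder} \<Rightarrow> 'n \<Rightarrow> real" where
  "AA r q = (if q \<le> r then 1 else 0)"

definition fd :: "'n::{finite,linorder} \<Rightarrow> real^('n::{finite,linorder}) \<Rightarrow> real" where
  "fd k y = (\<Sum>q\<in>UNIV. AA k q * (y$q * y$q)) + 2 * (y$k * (\<Sum>r\<in>UNIV. AA r k * y$r))"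

definition cc :: "'n::{finite,linorder} \<Rightarrow> 'n \<Rightarrow> 'n \<Rightarrow> real" where
  "cc k a b = 2 * ((if a = b then AA k b else 0) + (if k = b then AA a k else 0) + (if k = a then AA b k else 0))"

definition LL :: "'n::{finite,linorder} \<Rightarrow> 'n \<Rightarrow> real^('n::{finite,linorder}) \<Rightarrow> real" where
  "LL k a y = (\<Sum>b\<in>UNIV. cc k a b * y$b)"

lemma cc_sym1: "cc k a b = cc a k b" unfolding cc_def by auto
lemma cc_sym2: "cc k a b = cc k b a" unfolding cc_def by auto

lemma fgraph_alt: "fgraph = (\<lambda>y. \<Sum>r\<in>UNIV. \<Sum>q\<in>UNIV. AA r q * (y$r * (y$q * y$q)))"
  unfolding fgraph_def AA_def by (auto simp: pos_le_iff power2_eq_square intro!: ext sum.cong)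

lemma Sm_fgraph: "Sm fgraph"
  unfolding fgraph_alt by (intro Sm_sum Sm_mult Sm_const Sm_coord) auto

lemma Sm_fd: "Sm (fd k)"
  unfolding fd_def[abs_def] by (intro Sm_sum Sm_mult Sm_add Sm_const Sm_coord) auto

lemma Sm_LL: "Sm (LL k a)"
  unfolding LL_def[abs_def] by (intro Sm_sum Sm_mult Sm_const Sm_coord) auto

lemma pd_fgraph: "pd (k::'n::{finite,linorder}) fgraph = fd k"
proof (rule ext)
  fix y :: "real^('n::{finite,linorder})"
  have "pd k fgraph y = (\<Sum>r\<in>UNIV. \<Sum>q\<in>UNIV. pd k (\<lambda>y. AA r q * (y$r * (y$q * y$q))) y)"
    unfolding fgraph_alt
    by (subst pd_sum, simp, intro Sm_diffble Sm_sum Sm_mult Sm_const Sm_coord, simp,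
        intro sum.cong refl pd_sum, auto intro!: Sm_diffble Sm_mult Sm_const Sm_coord)
  also have "\<dots> = (\<Sum>r\<in>UNIV. \<Sum>q\<in>UNIV. AA r q * ((if r = k then 1 else 0) * (y$q * y$q)
        + y$r * ((if q = k then 1 else 0) * y$q + y$q * (if q = k then 1 else 0))))"
    by (intro sum.cong refl) (simp add: pd_mult Sm_diffble Sm_mult Sm_const Sm_coord pd_const pd_coord)
  also have "\<dots> = (\<Sum>r\<in>UNIV. (if r = k then (\<Sum>q\<in>UNIV. AA r q * (y$q * y$q)) else 0))
      + (\<Sum>r\<in>UNIV. AA r k * y$r * (2 * y$k))"
  proof -
    have "\<And>r. (\<Sum>q\<in>UNIV. AA r q * ((if r = k then 1 else 0) * (y$q * y$q)
        + y$r * ((if q = k then 1 else 0) * y$q + y$q * (if q = k then 1 else 0))))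
      = (if r = k then (\<Sum>q\<in>UNIV. AA r q * (y$q * y$q)) else 0)
        + (\<Sum>q\<in>UNIV. (if q = k then AA r q * y$r * (2 * y$q) else 0))"
    proof -
      fix r
      have e: "\<And>q. AA r q * ((if r = k then 1 else 0) * (y$q * y$q)
        + y$r * ((if q = k then 1 else 0) * y$q + y$q * (if q = k then 1 else 0)))
        = (if r = k then AA r q * (y$q * y$q) else 0) + (if q = k then AA r q * y$r * (2 * y$q) else 0)"
        by (auto simp: algebra_simps)
      show "?thesis r" unfolding e sum.distrib by (cases "r = k") simp_all
    qed
    then show ?thesis by (simp add: sum.distrib)
  qed
  also have "\<dots> = fd k y"
    unfolding fd_def by (simp add: sum_distrib_left sum_distrib_right algebra_simps)
  finally show "pd k fgraph y = fd k y" .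
qed

lemma Sm_diffble_coord[simp]: "(\<lambda>y::real^'n::finite. y $ i) differentiable (at x)"
  by (rule Sm_diffble) (rule Sm_coord)

lemma pd_fd: "pd (a::'n::{finite,linorder}) (fd k) = LL k a"
proof (rule ext)
  fix y :: "real^('n::{finite,linorder})"
  have d1: "(\<lambda>y::real^('n::{finite,linorder}). \<Sum>q\<in>UNIV. AA k q * (y$q * y$q)) differentiable (at y)"
    by (intro Sm_diffble Sm_sum Sm_mult Sm_const Sm_coord) auto
  have d2: "(\<lambda>y::real^('n::{finite,linorder}). 2 * (y$k * (\<Sum>r\<in>UNIV. AA r k * y$r))) differentiable (at y)"
    by (intro Sm_diffble Sm_sum Sm_mult Sm_const Sm_coord) auto
  have d3: "(\<lambda>y::real^('n::{finite,linorder}). (\<Sum>r\<in>UNIV. AA r k * y$r)) differentiable (at y)"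
    by (intro Sm_diffble Sm_sum Sm_mult Sm_const Sm_coord) auto
  have p1: "pd a (\<lambda>y::real^('n::{finite,linorder}). \<Sum>q\<in>UNIV. AA k q * (y$q * y$q)) y = 2 * AA k a * y$a"
  proof -
    have "pd a (\<lambda>y::real^('n::{finite,linorder}). \<Sum>q\<in>UNIV. AA k q * (y$q * y$q)) y
        = (\<Sum>q\<in>UNIV. pd a (\<lambda>y::real^('n::{finite,linorder}). AA k q * (y$q * y$q)) y)"
      by (rule pd_sum) (auto intro!: Sm_diffble Sm_mult Sm_const Sm_coord)
    also have "\<dots> = (\<Sum>q\<in>UNIV. if q = a then 2 * AA k a * y$a else 0)"
      by (intro sum.cong refl) (auto simp: pd_mult pd_const pd_coord)
    finally show ?thesis by simp
  qed
  have p2: "pd a (\<lambda>y::real^('n::{finite,linorder}). (\<Sum>r\<in>UNIV. AA r k * y$r)) y = AA a k"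
  proof -
    have "pd a (\<lambda>y::real^('n::{finite,linorder}). (\<Sum>r\<in>UNIV. AA r k * y$r)) y
        = (\<Sum>r\<in>UNIV. pd a (\<lambda>y::real^('n::{finite,linorder}). AA r k * y$r) y)"
      by (rule pd_sum) (auto intro!: Sm_diffble Sm_mult Sm_const Sm_coord)
    also have "\<dots> = (\<Sum>r\<in>UNIV. if r = a then AA a k else 0)"
      by (intro sum.cong refl) (auto simp: pd_mult pd_const pd_coord)
    finally show ?thesis by simp
  qed
  have p3: "pd a (\<lambda>y::real^('n::{finite,linorder}). 2 * (y$k * (\<Sum>r\<in>UNIV. AA r k * y$r))) y
      = 2 * ((if k = a then 1 else 0) * (\<Sum>r\<in>UNIV. AA r k * y$r) + y$k * AA a k)"
    using d3 by (simp add: pd_mult pd_const pd_coord p2)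
  have "pd a (fd k) y = 2 * AA k a * y$a + 2 * ((if k = a then 1 else 0) * (\<Sum>r\<in>UNIV. AA r k * y$r) + y$k * AA a k)"
    unfolding fd_def[abs_def] using d1 d2 by (simp add: pd_add p1 p3)
  also have "\<dots> = LL k a y"
  proof -
    have "LL k a y = (\<Sum>b\<in>UNIV. (if a = b then 2 * AA k b * y$b else 0) + (if k = b then 2 * AA a k * y$b else 0)
         + (if k = a then 2 * AA b k * y$b else 0))"
      unfolding LL_def cc_def by (intro sum.cong refl) (auto simp: algebra_simps)
    also have "\<dots> = 2 * AA k a * y$a + 2 * AA a k * y$k + (if k = a then 2 * (\<Sum>b\<in>UNIV. AA b k * y$b) else 0)"
      by (simp add: sum.distrib sum_distrib_left mult.assoc)
    finally show ?thesis by (simp add: algebra_simps)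
  qed
  finally show "pd a (fd k) y = LL k a y" .
qed

lemma pd_LL: "pd (b::'n::{finite,linorder}) (LL k a) = (\<lambda>y. cc k a b)"
proof (rule ext)
  fix y :: "real^('n::{finite,linorder})"
  have "pd b (LL k a) y = (\<Sum>m\<in>UNIV. pd b (\<lambda>y::real^('n::{finite,linorder}). cc k a m * y$m) y)"
    unfolding LL_def[abs_def] by (rule pd_sum) (auto intro!: Sm_diffble Sm_mult Sm_const Sm_coord)
  also have "\<dots> = (\<Sum>m\<in>UNIV. if m = b then cc k a b else 0)"
    by (intro sum.cong refl) (auto simp: pd_mult pd_const pd_coord)
  finally show "pd b (LL k a) y = cc k a b" by simp
qed

lemma fd_0[simp]: "fd k 0 = 0" by (simp add: fd_def)
lemma LL_0[simp]: "LL k a 0 = 0" by (simp add: LL_def)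

lemma van_1: "F 0 = 0 \<Longrightarrow> van 1 F"
  using van_Suc[of F 0] by simp

lemma van_fd: "van 2 (fd k)"
proof -
  have "van 1 (pd d (fd k))" for d
    unfolding pd_fd by (rule van_1) auto
  then show ?thesis using van_Suc[of "fd k" 1] by (simp add: numeral_2_eq_2)
qed


lemma matrix_inv_unique:
  fixes A B :: "real^'n::finite^'n"
  assumes "A ** B = mat 1" "B ** A = mat 1"
  shows "matrix_inv A = B"
proof -
  have "A ** matrix_inv A = mat 1 \<and> matrix_inv A ** A = mat 1"
    unfolding matrix_inv_def by (rule someI[of _ B]) (use assms in simp)
  then have "matrix_inv A ** A = mat 1" by simp
  have "matrix_inv A = matrix_inv A ** (A ** B)" using assms by simp
  also have "\<dots> = (matrix_inv A ** A) ** B" by (simp add: matrix_mul_assoc)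
  also have "\<dots> = B" using \<open>matrix_inv A ** A = mat 1\<close> by simp
  finally show ?thesis .
qed

lemma matrix_inv_props:
  fixes A B :: "real^'n::finite^'n"
  assumes "A ** B = mat 1" "B ** A = mat 1"
  shows "A ** matrix_inv A = mat 1" "matrix_inv A ** A = mat 1"
  using matrix_inv_unique[OF assms] assms by auto

abbreviation g0 where "g0 \<equiv> induced_metric fgraph"

lemma pd_graph_emb: "pd (i::'n::{finite,linorder}) (graph_emb fgraph) x = (axis i 1, fd i x)"
proof (rule pd_eqI)
  have l1: "((\<lambda>s. x + s *\<^sub>R axis i 1) has_vector_derivative axis i 1) (at 0)"
    by (auto intro!: derivative_eq_intros)
  have l2: "((\<lambda>s. fgraph (x + s *\<^sub>R axis i 1)) has_vector_derivative fd i x) (at 0)"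
    using pd_line_real[OF Sm_diffble[OF Sm_fgraph], of x i] pd_fgraph[of i]
    by (simp add: has_real_derivative_iff_has_vector_derivative)
  show "((\<lambda>s. graph_emb fgraph (x + s *\<^sub>R axis i 1)) has_vector_derivative (axis i 1, fd i x)) (at 0)"
    unfolding graph_emb_def by (rule has_vector_derivative_Pair[OF l1 l2])
qed

lemma g0_entry: "g0 x $ i $ j = (if i = j then 1 else 0) + fd i x * fd j x"
  unfolding induced_metric_def by (simp add: pd_graph_emb inner_axis_axis)

definition ss :: "real^('n::{finite,linorder}) \<Rightarrow> real" where
  "ss x = 1 + (\<Sum>r\<in>UNIV. fd r x * fd r x)"

lemma ss_pos: "ss x > 0"
proof -
  have "(\<Sum>r\<in>UNIV. fd r x * fd r x) \<ge> 0" by (intro sum_nonneg) auto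
  then show ?thesis unfolding ss_def by simp
qed

definition ginv :: "real^('n::{finite,linorder}) \<Rightarrow> real^('n::{finite,linorder})^('n::{finite,linorder})" where
  "ginv x = (\<chi> m l. (if m = l then 1 else 0) - fd m x * fd l x / ss x)"

lemma g0_ginv: "g0 x ** ginv x = mat 1"
proof -
  have "(g0 x ** ginv x) $ i $ j = (if i = j then 1 else 0)" for i j
  proof -
    have "(g0 x ** ginv x) $ i $ j = (\<Sum>k\<in>UNIV. ((if i = k then 1 else 0) + fd i x * fd k x) *
        ((if k = j then 1 else 0) - fd k x * fd j x / ss x))"
      by (simp add: matrix_matrix_mult_def g0_entry ginv_def)
    also have "\<dots> = (\<Sum>k\<in>UNIV. (if i = k then (if k = j then 1 else 0) - fd k x * fd j x / ss x else 0)
        + (if k = j then fd i x * fd k x else 0) - fd i x * fd j x / ss x * (fd k x * fd k x))"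
      by (intro sum.cong refl) (auto simp: algebra_simps)
    also have "\<dots> = (if i = j then 1 else 0) - fd i x * fd j x / ss x + fd i x * fd j x
        - fd i x * fd j x / ss x * (ss x - 1)"
      by (simp add: sum.distrib sum_subtractf sum_divide_distrib[symmetric] sum_distrib_left[symmetric] ss_def)
    also have "\<dots> = (if i = j then 1 else 0)"
      using ss_pos[of x] by (simp add: field_simps)
    finally show ?thesis .
  qed
  then show ?thesis by (simp add: vec_eq_iff mat_def)
qed

lemma ginv_g0: "ginv x ** g0 x = mat 1"
proof -
  have "(ginv x ** g0 x) $ i $ j = (if i = j then 1 else 0)" for i j
  proof -
    have "(ginv x ** g0 x) $ i $ j = (\<Sum>k\<in>UNIV. ((if i = k then 1 else 0) - fd i x * fd k x / ss x) *
        ((if k = j then 1 else 0) + fd k x * fd j x))"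
      by (simp add: matrix_matrix_mult_def g0_entry ginv_def)
    also have "\<dots> = (\<Sum>k\<in>UNIV. (if i = k then (if k = j then 1 else 0) + fd k x * fd j x else 0)
        - (if k = j then fd i x * fd k x / ss x else 0) - fd i x * fd j x / ss x * (fd k x * fd k x))"
      by (intro sum.cong refl) (auto simp: algebra_simps)
    also have "\<dots> = (if i = j then 1 else 0) + fd i x * fd j x - fd i x * fd j x / ss x
        - fd i x * fd j x / ss x * (ss x - 1)"
      by (simp add: sum.distrib sum_subtractf sum_divide_distrib[symmetric] sum_distrib_left[symmetric] ss_def)
    also have "\<dots> = (if i = j then 1 else 0)"
      using ss_pos[of x] by (simp add: field_simps)
    finally show ?thesis .
  qed
  then show ?thesis by (simp add: vec_eq_iff mat_def)
qed

lemma inv_g0: "matrix_inv (g0 x) = ginv x"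
  by (rule matrix_inv_unique[OF g0_ginv ginv_g0])


section \<open>Christoffel symbols and curvature of g0\<close>

definition qq :: "'n::{finite,linorder} \<Rightarrow> 'n \<Rightarrow> real^('n::{finite,linorder}) \<Rightarrow> real" where
  "qq j l = (\<lambda>y. fd j y * fd l y)"

lemma Sm_qq[simp,intro]: "Sm (qq j l)"
  unfolding qq_def by (intro Sm_mult Sm_fd)

lemma Sm_fd'[simp,intro]: "Sm (fd k)" by (rule Sm_fd)
lemma Sm_LL'[simp,intro]: "Sm (LL k a)" by (rule Sm_LL)

lemma van_qq: "van 4 (qq j l)"
  using van_mult[OF Sm_fd Sm_fd van_fd van_fd] unfolding qq_def by simp

lemma pd_g0: "pd i (\<lambda>y. g0 y $ j $ l) x = pd i (qq j l) x"
proof -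
  have "pd i (\<lambda>y. g0 y $ j $ l) x = pd i (\<lambda>y. (if j = l then 1 else 0) + qq j l y) x"
    by (simp add: g0_entry qq_def)
  also have "\<dots> = pd i (qq j l) x"
    by (subst pd_add) (auto simp: pd_const)
  finally show ?thesis .
qed

definition Bq :: "'n::{finite,linorder} \<Rightarrow> 'n \<Rightarrow> 'n \<Rightarrow> real^('n::{finite,linorder}) \<Rightarrow> real" where
  "Bq i j l = (\<lambda>y. pd i (qq j l) y + pd j (qq i l) y - pd l (qq i j) y)"

definition Gf :: "'n::{finite,linorder} \<Rightarrow> 'n \<Rightarrow> 'n \<Rightarrow> real^('n::{finite,linorder}) \<Rightarrow> real" where
  "Gf m i j = (\<lambda>y. (1/2) * (\<Sum>l\<in>UNIV. ginv y $ m $ l * Bq i j l y))"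

lemma Gam_g0: "Gam g0 y m i j = Gf m i j y"
  unfolding Gam_def Gf_def Bq_def by (simp add: inv_g0 pd_g0)

lemma Gam_g0_fun: "(\<lambda>y. Gam g0 y m i j) = Gf m i j"
  by (rule ext) (rule Gam_g0)

lemma Sm_ss[simp,intro]: "Sm ss"
  unfolding ss_def[abs_def] by (intro Sm_add Sm_sum Sm_mult Sm_const Sm_fd) auto

lemma ss_nz[simp]: "ss y \<noteq> 0" using ss_pos[of y] by simp

lemma Sm_Bq[simp,intro]: "Sm (Bq i j l)"
  unfolding Bq_def by (intro Sm_add Sm_diff Sm_pd Sm_qq)

lemma Sm_ginv[simp,intro]: "Sm (\<lambda>y. ginv y $ m $ l)"
proof -
  have "(\<lambda>y. ginv y $ m $ l) = (\<lambda>y. (if m = l then 1 else 0) - fd m y * fd l y / ss y)"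
    by (simp add: ginv_def)
  moreover have "Sm (\<lambda>y. (if m = l then 1 else 0) - fd m y * fd l y / ss y)"
    by (intro Sm_diff Sm_const Sm_divide Sm_mult Sm_fd Sm_ss) auto
  ultimately show ?thesis by simp
qed

lemma Sm_Gf[simp,intro]: "Sm (Gf m i j)"
  unfolding Gf_def by (intro Sm_mult Sm_const Sm_sum) auto

lemma van_cmult: "Sm F \<Longrightarrow> van k F \<Longrightarrow> van k (\<lambda>y. c * F y)"
  by (simp add: van_def iterpd_cmult)

lemma van_divide: "Sm F \<Longrightarrow> Sm G \<Longrightarrow> (\<And>y. G y \<noteq> 0) \<Longrightarrow> van k F \<Longrightarrow> van k (\<lambda>y. F y / G y)"
proof -
  assume a: "Sm F" "Sm G" "\<And>y. G y \<noteq> 0" "van k F"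
  have "Sm (\<lambda>y. 1 / G y)" using a by (intro Sm_divide) auto
  from van_mult[OF a(1) this a(4) van_0] show ?thesis by simp
qed

lemma van_Bq: "van 3 (Bq i j l)"
proof -
  have "van 3 (pd a (qq b c))" for a b c using van_pd[OF van_qq] by simp
  then show ?thesis unfolding Bq_def by (intro van_add van_diff Sm_add Sm_pd Sm_qq) auto
qed

definition Ef :: "'n::{finite,linorder} \<Rightarrow> 'n \<Rightarrow> 'n \<Rightarrow> real^('n::{finite,linorder}) \<Rightarrow> real" where
  "Ef m i j = (\<lambda>y. (1/2) * (\<Sum>l\<in>UNIV. (fd m y * fd l y / ss y) * Bq i j l y))"

lemma Sm_Ef[simp,intro]: "Sm (Ef m i j)"
  unfolding Ef_def by (intro Sm_mult Sm_const Sm_sum Sm_divide) auto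

lemma van_Ef: "van 7 (Ef m i j)"
proof -
  have "van 4 (\<lambda>y. fd m y * fd l y / ss y)" for l
  proof -
    have v: "van 4 (\<lambda>y. fd m y * fd l y)" using van_qq[of m l] by (simp add: qq_def)
    show ?thesis by (rule van_divide[OF _ Sm_ss ss_nz v]) (intro Sm_mult Sm_fd)
  qed
  then have "van (4 + 3) (\<lambda>y. (fd m y * fd l y / ss y) * Bq i j l y)" for l
    by (intro van_mult van_Bq) (auto intro!: Sm_divide Sm_mult)
  then show ?thesis unfolding Ef_def
    by (intro van_cmult van_sum) (auto intro!: Sm_sum Sm_divide Sm_mult)
qed

lemma Gf_split: "Gf m i j = (\<lambda>y. (1/2) * Bq i j m y - Ef m i j y)"
proof (rule ext)
  fix y
  have "(\<Sum>l\<in>UNIV. ginv y $ m $ l * Bq i j l y) =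
      (\<Sum>l\<in>UNIV. (if m = l then Bq i j l y else 0) - (fd m y * fd l y / ss y) * Bq i j l y)"
    unfolding ginv_def by (intro sum.cong refl) (auto simp: algebra_simps)
  also have "\<dots> = Bq i j m y - (\<Sum>l\<in>UNIV. (fd m y * fd l y / ss y) * Bq i j l y)"
    by (simp add: sum_subtractf)
  finally show "Gf m i j y = (1/2) * Bq i j m y - Ef m i j y"
    unfolding Gf_def Ef_def by (simp add: algebra_simps)
qed

lemma iterpd_Gf: "length ds < 7 \<Longrightarrow> iterpd ds (Gf m i j) 0 = (1/2) * iterpd ds (Bq i j m) 0"
proof -
  assume l: "length ds < 7"
  have sm: "Sm (\<lambda>y. (1/2) * Bq i j m y)" by (intro Sm_mult) auto
  have "iterpd ds (Gf m i j) 0 = (1/2) * iterpd ds (Bq i j m) 0 - iterpd ds (Ef m i j) 0"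
    unfolding Gf_split iterpd_diff[OF sm Sm_Ef] iterpd_cmult[OF Sm_Bq] by simp
  moreover have "iterpd ds (Ef m i j) 0 = 0" using van_Ef l unfolding van_def by blast
  ultimately show ?thesis by simp
qed

lemma van_Gf: "van 3 (Gf m i j)"
  unfolding van_def
proof (intro allI impI)
  fix ds :: "'a list" assume l: "length ds < 3"
  then have "iterpd ds (Gf m i j) 0 = (1/2) * iterpd ds (Bq i j m) 0" by (intro iterpd_Gf) simp
  also have "iterpd ds (Bq i j m) 0 = 0" using van_Bq[of i j m] l unfolding van_def by blast
  finally show "iterpd ds (Gf m i j) 0 = 0" by simp
qed

definition Wf :: "'n::{finite,linorder} \<Rightarrow> 'n \<Rightarrow> 'n \<Rightarrow> 'n \<Rightarrow> real^('n::{finite,linorder}) \<Rightarrow> real" where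
  "Wf i j k m = (\<lambda>y. \<Sum>p\<in>UNIV. Gf p j k y * Gf m i p y - Gf p i k y * Gf m j p y)"

lemma Sm_Wf[simp,intro]: "Sm (Wf i j k m)"
  unfolding Wf_def by (intro Sm_sum Sm_diff Sm_mult) auto

lemma van_Wf: "van 6 (Wf i j k m)"
proof -
  have "van (3+3) (\<lambda>y. Gf a b c y * Gf d e f y)" for a b c d e f
    by (intro van_mult van_Gf Sm_Gf)
  then show ?thesis unfolding Wf_def
    by (intro van_sum van_diff) (auto intro!: Sm_diff Sm_mult)
qed

definition Rupf :: "'n::{finite,linorder} \<Rightarrow> 'n \<Rightarrow> 'n \<Rightarrow> 'n \<Rightarrow> real^('n::{finite,linorder}) \<Rightarrow> real" where
  "Rupf i j k m = (\<lambda>y. pd i (Gf m j k) y - pd j (Gf m i k) y + Wf i j k m y)"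

lemma Rup_g0: "Rup g0 y i j k m = Rupf i j k m y"
  unfolding Rup_def Rupf_def Wf_def by (simp add: Gam_g0 Gam_g0_fun)

lemma Sm_Rupf[simp,intro]: "Sm (Rupf i j k m)"
  unfolding Rupf_def by (intro Sm_add Sm_diff Sm_pd) auto

lemma Rupf_0: "Rupf i j k m 0 = 0"
proof -
  have "iterpd [i] (Gf m j k) 0 = 0" using van_Gf[of m j k, unfolded van_def, rule_format, of "[i]"] by simp
  moreover have "iterpd [j] (Gf m i k) 0 = 0" using van_Gf[of m i k, unfolded van_def, rule_format, of "[j]"] by simp
  moreover have "iterpd [] (Wf i j k m) 0 = 0" using van_Wf[of i j k m, unfolded van_def, rule_format, of "[]"] by simp
  ultimately show ?thesis unfolding Rupf_def by simp
qed

lemma Rm_g0_0: "Rm g0 i j k l 0 = 0"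
  unfolding Rm_def by (simp add: Rup_g0 Rupf_0)

definition Ricf :: "'n::{finite,linorder} \<Rightarrow> 'n \<Rightarrow> real^('n::{finite,linorder}) \<Rightarrow> real" where
  "Ricf j k = (\<lambda>y. \<Sum>i\<in>UNIV. Rupf i j k i y)"

lemma Ric_g0: "Ric g0 y j k = Ricf j k y"
  unfolding Ric_def Ricf_def by (simp add: Rup_g0)

lemma Sm_Ricf[simp,intro]: "Sm (Ricf j k)"
  unfolding Ricf_def by (intro Sm_sum) auto


section \<open>Jets at 0\<close>

lemma Q4: "iterpd [d1,d2,d3,d4] (qq k l) 0 =
   cc k d1 d2 * cc l d3 d4 + cc k d1 d3 * cc l d2 d4 + cc k d1 d4 * cc l d2 d3 +
   cc k d2 d3 * cc l d1 d4 + cc k d2 d4 * cc l d1 d3 + cc k d3 d4 * cc l d1 d2"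
  by (simp add: qq_def pd_add_fun pd_mult_fun pd_fd pd_LL pd_const_fun Sm_add Sm_mult Sm_const algebra_simps)

lemma iterpd_Bq: "iterpd ds (Bq j k m) 0 =
   iterpd (j#ds) (qq k m) 0 + iterpd (k#ds) (qq j m) 0 - iterpd (m#ds) (qq j k) 0"
  unfolding Bq_def by (simp add: iterpd_add iterpd_diff Sm_add Sm_pd)

lemma Ric2: "iterpd [b,a] (Ricf j k) 0 = (1/2) * (\<Sum>i\<in>UNIV.
    iterpd [j,i,b,a] (qq k i) 0 + iterpd [k,i,b,a] (qq j i) 0 - iterpd [i,i,b,a] (qq j k) 0
    - (iterpd [i,j,b,a] (qq k i) 0 + iterpd [k,j,b,a] (qq i i) 0 - iterpd [i,j,b,a] (qq i k) 0))"
proof -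
  have "iterpd [b,a] (Ricf j k) 0 = (\<Sum>i\<in>UNIV. iterpd [b,a] (Rupf i j k i) 0)"
    unfolding Ricf_def by (subst iterpd_sum) auto
  also have "\<dots> = (\<Sum>i\<in>UNIV. (1/2) * (
    iterpd [j,i,b,a] (qq k i) 0 + iterpd [k,i,b,a] (qq j i) 0 - iterpd [i,i,b,a] (qq j k) 0
    - (iterpd [i,j,b,a] (qq k i) 0 + iterpd [k,j,b,a] (qq i i) 0 - iterpd [i,j,b,a] (qq i k) 0)))"
  proof (intro sum.cong refl)
    fix i
    have w: "iterpd [b,a] (Wf i j k i) 0 = 0"
      using van_Wf[of i j k i, unfolded van_def, rule_format, of "[b,a]"] by simp
    have "iterpd [b,a] (Rupf i j k i) 0 = iterpd [i,b,a] (Gf i j k) 0 - iterpd [j,b,a] (Gf i i k) 0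
        + iterpd [b,a] (Wf i j k i) 0"
    proof -
      have e1: "iterpd [b,a] (\<lambda>y. (pd i (Gf i j k) y - pd j (Gf i i k) y) + Wf i j k i y) =
        (\<lambda>y. iterpd [b,a] (\<lambda>y. pd i (Gf i j k) y - pd j (Gf i i k) y) y + iterpd [b,a] (Wf i j k i) y)"
        by (rule iterpd_add) auto
      have e2: "iterpd [b,a] (\<lambda>y. pd i (Gf i j k) y - pd j (Gf i i k) y) =
        (\<lambda>y. iterpd [b,a] (pd i (Gf i j k)) y - iterpd [b,a] (pd j (Gf i i k)) y)"
        by (rule iterpd_diff) auto
      show ?thesis unfolding Rupf_def e1 e2 by simp
    qed
    also have "\<dots> = (1/2) * iterpd [i,b,a] (Bq j k i) 0 - (1/2) * iterpd [j,b,a] (Bq i k i) 0"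
      using w iterpd_Gf[of "[i,b,a]" i j k] iterpd_Gf[of "[j,b,a]" i i k] by simp
    finally show "iterpd [b,a] (Rupf i j k i) 0 = (1/2) * (
      iterpd [j,i,b,a] (qq k i) 0 + iterpd [k,i,b,a] (qq j i) 0 - iterpd [i,i,b,a] (qq j k) 0
      - (iterpd [i,j,b,a] (qq k i) 0 + iterpd [k,j,b,a] (qq i i) 0 - iterpd [i,j,b,a] (qq i k) 0))"
      using iterpd_Bq[of "[i,b,a]" j k i] iterpd_Bq[of "[j,b,a]" i k i] by (simp add: algebra_simps)
  qed
  finally show ?thesis by (simp add: sum_distrib_left)
qed


definition Q4c :: "('n \<Rightarrow> 'n \<Rightarrow> 'n \<Rightarrow> real) \<Rightarrow> 'n \<Rightarrow> 'n \<Rightarrow> 'n \<Rightarrow> 'n \<Rightarrow> 'n \<Rightarrow> 'n \<Rightarrow> real" where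
  "Q4c c k l d1 d2 d3 d4 =
   c k d1 d2 * c l d3 d4 + c k d1 d3 * c l d2 d4 + c k d1 d4 * c l d2 d3 +
   c k d2 d3 * c l d1 d4 + c k d2 d4 * c l d1 d3 + c k d3 d4 * c l d1 d2"

definition rs :: "('n \<Rightarrow> 'n \<Rightarrow> 'n \<Rightarrow> real) \<Rightarrow> 'n \<Rightarrow> 'n \<Rightarrow> 'n \<Rightarrow> 'n \<Rightarrow> 'n \<Rightarrow> real" where
  "rs c a b j k i = Q4c c k i j i b a + Q4c c j i k i b a - Q4c c j k i i b a
     - (Q4c c k i i j b a + Q4c c i i k j b a - Q4c c i k i j b a)"

lemma abstract_identity:
  fixes c :: "'n \<Rightarrow> 'n \<Rightarrow> 'n \<Rightarrow> real"
  assumes s1: "\<And>a b d. c a b d = c b a d" and s2: "\<And>a b d. c a b d = c a d b"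
  shows "- (1/2) * (rs c i j k l m + rs c i k j l m - rs c i l j k m - rs c j i k l m - rs c j k i l m + rs c j l i k m)
    = 2 * (c i l m * c j k m - c i k m * c j l m)"
  unfolding rs_def Q4c_def by (simp add: s1 s2 algebra_simps)


lemma cc_off: "a \<noteq> b \<Longrightarrow> cc a b m = (if m = min a b then 2 else 0)"
  unfolding cc_def AA_def by (auto simp: min_def)

lemma cc_diag: "cc a a m = (if m = a then 6 else if a < m then 2 else 0)"
  unfolding cc_def AA_def by auto

lemma sum_off_left: "a \<noteq> b \<Longrightarrow> (\<Sum>m\<in>UNIV. cc a b m * X m) = 2 * X (min a b)"
proof -
  assume ab: "a \<noteq> b"
  have "(\<Sum>m\<in>UNIV. cc a b m * X m) = (\<Sum>m\<in>UNIV. if m = min a b then 2 * X m else 0)"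
    using ab by (intro sum.cong refl) (simp add: cc_off)
  then show ?thesis by simp
qed

lemma sum_off_right: "a \<noteq> b \<Longrightarrow> (\<Sum>m\<in>UNIV. X m * cc a b m) = 2 * X (min a b)"
proof -
  assume ab: "a \<noteq> b"
  have "(\<Sum>m\<in>UNIV. X m * cc a b m) = (\<Sum>m\<in>UNIV. if m = min a b then 2 * X m else 0)"
    using ab by (intro sum.cong refl) (simp add: cc_off)
  then show ?thesis by simp
qed

definition SS :: "'n::{finite,linorder} \<Rightarrow> 'n \<Rightarrow> 'n \<Rightarrow> 'n \<Rightarrow> real" where
  "SS i j k l = (\<Sum>m\<in>UNIV. cc i l m * cc j k m - cc i k m * cc j l m)"

lemma SS_split: "SS i j k l = (\<Sum>m\<in>UNIV. cc i l m * cc j k m) - (\<Sum>m\<in>UNIV. cc i k m * cc j l m)"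
  unfolding SS_def by (simp add: sum_subtractf)

lemma SS_zero:
  fixes i j k l :: "'n::{finite,linorder}"
  assumes "{i, j} \<noteq> {k, l}"
  shows "SS i j k l = 0"
proof (cases "i = j \<or> k = l")
  case True
  then show ?thesis unfolding SS_def by (auto simp: mult.commute)
next
  case False
  then have ij: "i \<noteq> j" and kl: "k \<noteq> l" by auto
  have jk: "i = l \<Longrightarrow> j \<noteq> k" using assms by (auto simp: insert_commute)
  have jl: "i = k \<Longrightarrow> j \<noteq> l" using assms by (auto simp: insert_commute)
  have A: "(\<Sum>m\<in>UNIV. cc i l m * cc j k m) =
      (if i \<noteq> l then 2 * cc j k (min i l) else 2 * cc i l (min j k))"
  proof (cases "i = l")
    case True then show ?thesis using jk by (simp add: sum_off_right)
  next
    case False then show ?thesis by (simp add: sum_off_left)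
  qed
  have B: "(\<Sum>m\<in>UNIV. cc i k m * cc j l m) =
      (if i \<noteq> k then 2 * cc j l (min i k) else 2 * cc i k (min j l))"
  proof (cases "i = k")
    case True then show ?thesis using jl by (simp add: sum_off_right)
  next
    case False then show ?thesis by (simp add: sum_off_left)
  qed
  have mn: "\<And>x y z::'n. x \<noteq> y \<Longrightarrow> x \<noteq> z \<Longrightarrow> (min x z = min x y) \<longleftrightarrow> (x < y \<and> x < z) \<or> y = z"
    by (auto simp: min_def)
  consider "i = l" | "i \<noteq> l" "j = k" | "i \<noteq> l" "j \<noteq> k" "i = k" | "i \<noteq> l" "j \<noteq> k" "i \<noteq> k" "j = l"
    | "i \<noteq> l" "j \<noteq> k" "i \<noteq> k" "j \<noteq> l" by blast
  then show ?thesis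
  proof cases
    case 1
    then have "j \<noteq> k" "i \<noteq> k" using jk kl by auto
    then show ?thesis unfolding SS_split A B using 1 ij
      by (simp add: cc_off cc_diag) (auto simp: min_def)
  next
    case 2
    then show ?thesis unfolding SS_split A B using ij kl jl
      by (simp add: cc_off cc_diag) (auto simp: min_def)
  next
    case 3
    then show ?thesis unfolding SS_split A B using ij kl jl
      by (simp add: cc_off cc_diag) (auto simp: min_def)
  next
    case 4
    then show ?thesis unfolding SS_split A B using ij kl
      by (simp add: cc_off cc_diag) (auto simp: min_def)
  next
    case 5
    then show ?thesis unfolding SS_split A B using ij kl
      by (simp add: cc_off cc_diag) (auto simp: min_def)
  qed
qed

lemma card_greater: "card {m. (j::'n::{finite,linorder}) < m} = CARD('n) - pos j"
proof -
  have "{m. j < m} = UNIV - {m. m \<le> j}" by auto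
  then show ?thesis unfolding pos_def by (simp add: card_Diff_subset)
qed

lemma pos_le_card: "pos (j::'n::{finite,linorder}) \<le> CARD('n)"
  unfolding pos_def by (rule card_mono) auto

lemma SS_ij:
  fixes i j :: "'n::{finite,linorder}"
  assumes "i < j"
  shows "SS i j i j = - 8 - 4 * (real CARD('n) - real (pos j))"
proof -
  have ij: "i \<noteq> j" using assms by simp
  have 1: "(\<Sum>m\<in>UNIV. cc i j m * cc j i m) = 4"
    by (subst sum_off_left[OF ij]) (simp add: cc_off min.commute ij[symmetric])
  have "(\<Sum>m\<in>UNIV. cc i i m * cc j j m) = (\<Sum>m\<in>UNIV. (if m = j then 12 else 0) + (if j < m then 4 else 0))"
    using assms by (intro sum.cong refl) (auto simp: cc_diag)
  also have "\<dots> = 12 + 4 * real (card {m. j < m})"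
    by (simp add: sum.distrib sum.If_cases)
  also have "\<dots> = 12 + 4 * (real CARD('n) - real (pos j))"
    using pos_le_card[of j] by (simp add: card_greater of_nat_diff)
  finally have 2: "(\<Sum>m\<in>UNIV. cc i i m * cc j j m) = 12 + 4 * (real CARD('n) - real (pos j))" .
  show ?thesis unfolding SS_split 1 2 by simp
qed


lemma Q4_cc: "iterpd [d1,d2,d3,d4] (qq k l) 0 = Q4c cc k l d1 d2 d3 d4"
  unfolding Q4 Q4c_def ..

lemma Ric2_rs: "iterpd [b,a] (Ricf j k) 0 = (1/2) * (\<Sum>i\<in>UNIV. rs cc a b j k i)"
  unfolding Ric2 Q4_cc rs_def ..

definition Dd :: "'n::{finite,linorder} \<Rightarrow> 'n \<Rightarrow> 'n \<Rightarrow> 'n \<Rightarrow> real" where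
  "Dd a b k l = - 2 * iterpd [b,a] (Ricf k l) 0"

definition dR :: "'n::{finite,linorder} \<Rightarrow> 'n \<Rightarrow> 'n \<Rightarrow> 'n \<Rightarrow> real" where
  "dR i j k l = (1/2) * (Dd i j k l + Dd i k j l - Dd i l j k - Dd j i k l - Dd j k i l + Dd j l i k)"

lemma dR_SS: "dR i j k l = 2 * SS i j k l"
proof -
  have "dR i j k l = (\<Sum>m\<in>UNIV. - (1/2) * (rs cc i j k l m + rs cc i k j l m - rs cc i l j k m
      - rs cc j i k l m - rs cc j k i l m + rs cc j l i k m))"
    unfolding dR_def Dd_def Ric2_rs
    by (simp add: sum.distrib sum_subtractf sum_distrib_left sum_negf algebra_simps)
  also have "\<dots> = (\<Sum>m\<in>UNIV. 2 * (cc i l m * cc j k m - cc i k m * cc j l m))"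
    by (intro sum.cong refl abstract_identity) (auto intro: cc_sym1 cc_sym2)
  also have "\<dots> = 2 * SS i j k l" unfolding SS_def by (simp add: sum_distrib_left)
  finally show ?thesis .
qed


lemma Ck_cong: "(\<And>x. x \<in> S \<Longrightarrow> F x = H x) \<Longrightarrow> Ck k S F \<Longrightarrow> Ck k S H"
proof (induction k arbitrary: F H)
  case 0
  then show ?case using continuous_on_cong by (metis Ck.simps(1))
next
  case (Suc k)
  from Suc.prems(2) obtain F' where F': "\<forall>x\<in>S. (F has_derivative F' x) (at x within S)"
    "\<forall>v. Ck k S (\<lambda>x. F' x v)" by auto
  have "\<forall>x\<in>S. (H has_derivative F' x) (at x within S)"
  proof
    fix x assume x: "x \<in> S"
    show "(H has_derivative F' x) (at x within S)"
      by (rule has_derivative_transform_within[OF F'(1)[rule_format, OF x] zero_less_one x])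
         (use Suc.prems(1) in auto)
  qed
  then show ?case using F'(2) by auto
qed

locale strip =
  fixes T :: real and U :: "(real^'n::finite) set"
  assumes T_pos: "T > 0" and U_open: "open U"
begin

abbreviation Sd :: "(real \<times> (real^'n)) set" where "Sd \<equiv> {0..<T} \<times> U"

lemma uniq_cond:
  assumes z: "z \<in> Sd" and i: "i \<in> Basis" and e: "e > 0"
  shows "\<exists>d. 0 < \<bar>d\<bar> \<and> \<bar>d\<bar> < e \<and> z + d *\<^sub>R i \<in> Sd"
proof -
  obtain t x where zt: "z = (t, x)" and t: "0 \<le> t" "t < T" and x: "x \<in> U" using z by auto
  from i consider "i = (1, 0)" | v where "v \<in> Basis" "i = (0, v)"
    by (auto simp: Basis_prod_def)
  then show ?thesis
  proof cases
    case 1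
    let ?d = "min e (T - t) / 2"
    have d1: "?d \<le> (T - t) / 2" "?d \<le> e / 2" by auto
    have "0 < ?d" using t e by (auto simp: min_def)
    moreover have "?d < e" using d1 e by linarith
    moreover have "(T - t) / 2 < T - t" using t by simp
    then have "t + ?d < T" using d1 t by linarith
    then have "z + ?d *\<^sub>R i \<in> Sd" using t x \<open>0 < ?d\<close> by (auto simp: zt 1)
    ultimately have "0 < ?d" "?d < e" "z + ?d *\<^sub>R i \<in> Sd" by auto
    then show ?thesis by (intro exI[of _ ?d]) auto
  next
    case (2 v)
    obtain r where r: "r > 0" "ball x r \<subseteq> U" using U_open x open_contains_ball by blast
    let ?d = "min e r / 2"
    have nv: "norm v = 1" using 2 by (simp add: norm_Basis)
    have "x + ?d *\<^sub>R v \<in> ball x r" using r e nv by (auto simp: dist_norm min_def)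
    then have "z + ?d *\<^sub>R i \<in> Sd" using r t by (auto simp: zt 2)
    moreover have "0 < ?d" "?d < e" using r e by (auto simp: min_def)
    ultimately show ?thesis by (intro exI[of _ ?d]) auto
  qed
qed

lemma deriv_unique:
  assumes "z \<in> Sd" "(F has_derivative F1) (at z within Sd)" "(F has_derivative F2) (at z within Sd)"
  shows "F1 = F2"
  by (rule frechet_derivative_unique_within[OF assms(2,3)]) (use uniq_cond assms(1) in blast)

lemma smooth_deriv_ex:
  assumes "smooth_on Sd F"
  shows "\<exists>F'. (\<forall>z\<in>Sd. (F has_derivative F' z) (at z within Sd)) \<and> (\<forall>v. smooth_on Sd (\<lambda>z. F' z v))"
proof -
  from assms have "Ck (Suc 0) Sd F" unfolding smooth_on_def by blast
  then obtain F0 where F0: "\<forall>z\<in>Sd. (F has_derivative F0 z) (at z within Sd)" by auto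
  have "Ck k Sd (\<lambda>z. F0 z v)" for k v
  proof -
    from assms have "Ck (Suc k) Sd F" unfolding smooth_on_def by blast
    then obtain Fk where Fk: "\<forall>z\<in>Sd. (F has_derivative Fk z) (at z within Sd)" "\<forall>v. Ck k Sd (\<lambda>z. Fk z v)"
      by auto
    have "\<And>z. z \<in> Sd \<Longrightarrow> Fk z v = F0 z v"
      using deriv_unique Fk(1) F0 by metis
    then show ?thesis using Ck_cong[of Sd "\<lambda>z. Fk z v" "\<lambda>z. F0 z v" k] Fk(2) by blast
  qed
  then show ?thesis using F0 unfolding smooth_on_def by blast
qed

definition dS :: "(real \<times> (real^'n) \<Rightarrow> real) \<Rightarrow> real \<times> (real^'n) \<Rightarrow> real \<times> (real^'n) \<Rightarrow> real" where
  "dS F = (SOME F'. (\<forall>z\<in>Sd. (F has_derivative F' z) (at z within Sd)) \<and> (\<forall>v. smooth_on Sd (\<lambda>z. F' z v)))"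

lemma dS:
  assumes "smooth_on Sd F"
  shows "\<And>z. z \<in> Sd \<Longrightarrow> (F has_derivative dS F z) (at z within Sd)" "\<And>v. smooth_on Sd (\<lambda>z. dS F z v)"
  using someI_ex[OF smooth_deriv_ex[OF assms]] unfolding dS_def[symmetric] by auto

definition Ft :: "(real \<times> (real^'n) \<Rightarrow> real) \<Rightarrow> real \<times> (real^'n) \<Rightarrow> real" where
  "Ft F z = dS F z (1, 0)"

definition Fx :: "'n \<Rightarrow> (real \<times> (real^'n) \<Rightarrow> real) \<Rightarrow> real \<times> (real^'n) \<Rightarrow> real" where
  "Fx a F z = dS F z (0, axis a 1)"

lemma smooth_Ft: "smooth_on Sd F \<Longrightarrow> smooth_on Sd (Ft F)"
  unfolding Ft_def[abs_def] using dS(2) by blast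

lemma smooth_Fx: "smooth_on Sd F \<Longrightarrow> smooth_on Sd (Fx a F)"
  unfolding Fx_def[abs_def] using dS(2) by blast

lemma smooth_cont: "smooth_on Sd F \<Longrightarrow> continuous_on Sd F"
  unfolding smooth_on_def by (metis Ck.simps(1))

lemma Fx_line:
  assumes F: "smooth_on Sd F" and t: "t \<in> {0..<T}" and x: "x \<in> U"
  shows "((\<lambda>s. F (t, x + s *\<^sub>R axis a 1)) has_real_derivative Fx a F (t, x)) (at 0)"
proof -
  let ?W = "(\<lambda>s::real. x + s *\<^sub>R axis a 1) -` U"
  have oW: "open ?W" by (rule open_vimage[OF U_open]) (auto intro!: continuous_intros)
  have W0: "0 \<in> ?W" using x by simp
  let ?p = "\<lambda>s::real. (t, x + s *\<^sub>R axis a 1)"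
  have p: "(?p has_derivative (\<lambda>s. s *\<^sub>R (0, axis a 1))) (at 0 within ?W)"
    by (auto intro!: derivative_eq_intros simp: scaleR_prod_def)
  have pW: "?p ` ?W \<subseteq> Sd" using t by auto
  have Fd: "(F has_derivative dS F (t, x)) (at (?p 0) within ?p ` ?W)"
    using dS(1)[OF F, of "(t,x)"] t x by (auto intro: has_derivative_subset[OF _ pW])
  have "((F \<circ> ?p) has_derivative (dS F (t,x) \<circ> (\<lambda>s. s *\<^sub>R (0, axis a 1)))) (at 0 within ?W)"
    by (rule diff_chain_within[OF p Fd])
  then have c: "((\<lambda>s. F (t, x + s *\<^sub>R axis a 1)) has_derivative (\<lambda>s. dS F (t,x) (s *\<^sub>R (0, axis a 1)))) (at 0)"
    using at_within_open[OF W0 oW] by (simp add: o_def)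
  have lin: "linear (dS F (t,x))" using dS(1)[OF F, of "(t,x)"] t x has_derivative_linear by blast
  have "(\<lambda>s. dS F (t,x) (s *\<^sub>R (0, axis a 1))) = (*) (Fx a F (t, x))"
  proof (rule ext)
    fix s :: real
    have "dS F (t,x) (s *\<^sub>R (0, axis a 1)) = s *\<^sub>R dS F (t,x) (0, axis a 1)"
      by (rule linear_scale[OF lin])
    then show "dS F (t,x) (s *\<^sub>R (0, axis a 1)) = Fx a F (t, x) * s"
      unfolding Fx_def by (simp only: real_scaleR_def mult.commute)
  qed
  then show ?thesis using c by (simp add: has_field_derivative_def)
qed

lemma pd_Fx:
  assumes F: "smooth_on Sd F" and t: "t \<in> {0..<T}" and x: "x \<in> U"
  shows "pd a (\<lambda>y. F (t, y)) x = Fx a F (t, x)"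
  by (rule pd_eqI_real[OF Fx_line[OF assms]])

lemma Ft_line:
  assumes F: "smooth_on Sd F" and t: "t \<in> {0..<T}" and x: "x \<in> U"
  shows "((\<lambda>s. F (s, x)) has_real_derivative Ft F (t, x)) (at t within {0..<T})"
proof -
  let ?p = "\<lambda>s::real. (s, x)"
  have p: "(?p has_derivative (\<lambda>s. s *\<^sub>R (1, 0))) (at t within {0..<T})"
    by (auto intro!: derivative_eq_intros simp: scaleR_prod_def)
  have pW: "?p ` {0..<T} \<subseteq> Sd" using x by auto
  have Fd: "(F has_derivative dS F (t, x)) (at (?p t) within ?p ` {0..<T})"
    using dS(1)[OF F, of "(t,x)"] t x by (auto intro: has_derivative_subset[OF _ pW])
  have c: "((F \<circ> ?p) has_derivative (dS F (t,x) \<circ> (\<lambda>s. s *\<^sub>R (1, 0)))) (at t within {0..<T})"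
    by (rule diff_chain_within[OF p Fd])
  have lin: "linear (dS F (t,x))" using dS(1)[OF F, of "(t,x)"] t x has_derivative_linear by blast
  have "(dS F (t,x) \<circ> (\<lambda>s. s *\<^sub>R (1, 0))) = (*) (Ft F (t, x))"
  proof (rule ext)
    fix s :: real
    have "dS F (t,x) (s *\<^sub>R (1, 0)) = s *\<^sub>R dS F (t,x) (1, 0)"
      by (rule linear_scale[OF lin])
    then show "(dS F (t,x) \<circ> (\<lambda>s. s *\<^sub>R (1, 0))) s = Ft F (t, x) * s"
      unfolding Ft_def o_def by (simp only: real_scaleR_def mult.commute)
  qed
  then show ?thesis using c by (simp add: has_field_derivative_def o_def)
qed


lemma deriv_unique_Ico:
  assumes "(f has_real_derivative D1) (at t within {0..<T})" "(f has_real_derivative D2) (at t within {0..<T})"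
    and t: "t \<in> {0..<T}"
  shows "D1 = D2"
proof -
  have "(*) D1 = (*) D2"
  proof (rule frechet_derivative_unique_within[OF assms(1,2)[unfolded has_field_derivative_def]])
    fix i :: real and e :: real assume i: "i \<in> Basis" and e: "0 < e"
    then have i1: "i = 1" by simp
    let ?d = "min e (T - t) / 2"
    have d1: "?d \<le> (T - t) / 2" "?d \<le> e / 2" by auto
    have "(T - t) / 2 < T - t" using t by simp
    then have "t + ?d < T" using d1 t by linarith
    moreover have "0 < ?d" using t e by (auto simp: min_def)
    moreover have "?d < e" using d1 e by linarith
    ultimately show "\<exists>d. 0 < \<bar>d\<bar> \<and> \<bar>d\<bar> < e \<and> t + d *\<^sub>R i \<in> {0..<T}"
      using t by (intro exI[of _ ?d]) (auto simp: i1)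
  qed
  then show ?thesis by (metis mult.right_neutral)
qed

lemma commute:
  assumes F: "smooth_on Sd F" and x: "x \<in> U"
  shows "((\<lambda>t. Fx a F (t, x)) has_real_derivative Fx a (Ft F) (0, x)) (at 0 within {0..<T})"
proof -
  obtain r where r: "r > 0" "cball x r \<subseteq> U" using U_open x open_contains_cball by blast
  define t1 where "t1 = T / 2"
  have t1: "0 < t1" "t1 < T" using T_pos by (auto simp: t1_def)
  define e :: "real^'n" where "e = axis a 1"
  have ne: "norm e = 1" by (simp add: e_def)
  define I where "I = {-r<..<r}"
  have oI: "open I" and cI: "convex I" and I0: "0 \<in> I" using r by (auto simp: I_def)
  have inU: "x + s *\<^sub>R e \<in> U" if "s \<in> I" for s
  proof -
    have "dist x (x + s *\<^sub>R e) \<le> r" using that ne by (auto simp: I_def dist_norm)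
    then show ?thesis using r by auto
  qed
  have FtF: "smooth_on Sd (Ft F)" by (rule smooth_Ft[OF F])
  define Ftx where "Ftx = Fx a (Ft F)"
  have Ftx_s: "smooth_on Sd Ftx" unfolding Ftx_def by (rule smooth_Fx[OF FtF])
  have cFt: "continuous_on Sd (Ft F)" by (rule smooth_cont[OF FtF])
  have cFtx: "continuous_on Sd Ftx" by (rule smooth_cont[OF Ftx_s])
  have ftc: "F (t, x + s *\<^sub>R e) - F (0, x + s *\<^sub>R e) = integral {0..t} (\<lambda>\<tau>. Ft F (\<tau>, x + s *\<^sub>R e))"
    if s: "s \<in> I" and t: "t \<in> {0..t1}" for s t
  proof -
    have "((\<lambda>\<tau>. Ft F (\<tau>, x + s *\<^sub>R e)) has_integral (F (t, x + s *\<^sub>R e) - F (0, x + s *\<^sub>R e))) {0..t}"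
    proof (rule fundamental_theorem_of_calculus)
      show "0 \<le> t" using t by simp
      fix \<tau> assume "\<tau> \<in> {0..t}"
      then have \<tau>: "\<tau> \<in> {0..<T}" using t t1 by auto
      have "((\<lambda>\<sigma>. F (\<sigma>, x + s *\<^sub>R e)) has_real_derivative Ft F (\<tau>, x + s *\<^sub>R e)) (at \<tau> within {0..<T})"
        by (rule Ft_line[OF F \<tau> inU[OF s]])
      then have "((\<lambda>\<sigma>. F (\<sigma>, x + s *\<^sub>R e)) has_real_derivative Ft F (\<tau>, x + s *\<^sub>R e)) (at \<tau> within {0..t})"
        by (rule has_field_derivative_subset) (use t t1 in auto)
      then show "((\<lambda>\<sigma>. F (\<sigma>, x + s *\<^sub>R e)) has_vector_derivative Ft F (\<tau>, x + s *\<^sub>R e)) (at \<tau> within {0..t})"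
        by (simp add: has_real_derivative_iff_has_vector_derivative)
    qed
    then show ?thesis by (simp add: integral_unique)
  qed
  have leib: "((\<lambda>s. integral {0..t} (\<lambda>\<tau>. Ft F (\<tau>, x + s *\<^sub>R e))) has_real_derivative
      integral {0..t} (\<lambda>\<tau>. Ftx (\<tau>, x + 0 *\<^sub>R e))) (at 0 within I)" if t: "t \<in> {0..t1}" for t
  proof -
    have sub: "(\<lambda>(s, \<tau>). (\<tau>, x + s *\<^sub>R e)) ` (I \<times> cbox 0 t) \<subseteq> Sd"
      using t t1 inU by (auto simp: cbox_interval)
    have "((\<lambda>s. integral (cbox 0 t) (\<lambda>\<tau>. Ft F (\<tau>, x + s *\<^sub>R e))) has_real_derivative
      integral (cbox 0 t) (\<lambda>\<tau>. Ftx (\<tau>, x + 0 *\<^sub>R e))) (at 0 within I)"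
    proof (rule leibniz_rule_field_derivative[where fx = "\<lambda>s \<tau>. Ftx (\<tau>, x + s *\<^sub>R e)"])
      fix s \<tau> assume s: "s \<in> I" and \<tau>: "\<tau> \<in> cbox 0 t"
      have \<tau>': "\<tau> \<in> {0..<T}" using \<tau> t t1 by (auto simp: cbox_interval)
      have "((\<lambda>u. Ft F (\<tau>, (x + s *\<^sub>R e) + u *\<^sub>R axis a 1)) has_real_derivative Fx a (Ft F) (\<tau>, x + s *\<^sub>R e)) (at 0)"
        by (rule Fx_line[OF FtF \<tau>' inU[OF s]])
      then have "((\<lambda>u. Ft F (\<tau>, x + (u + s) *\<^sub>R e)) has_real_derivative Ftx (\<tau>, x + s *\<^sub>R e)) (at 0)"
        by (simp add: e_def Ftx_def scaleR_add_left algebra_simps)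
      then have "((\<lambda>u. Ft F (\<tau>, x + u *\<^sub>R e)) has_real_derivative Ftx (\<tau>, x + s *\<^sub>R e)) (at (0 + s))"
        by (subst DERIV_shift) simp
      then show "((\<lambda>s. Ft F (\<tau>, x + s *\<^sub>R e)) has_real_derivative Ftx (\<tau>, x + s *\<^sub>R e)) (at s within I)"
        by (simp add: has_field_derivative_at_within)
    next
      fix s assume s: "s \<in> I"
      have "continuous_on {0..t} (\<lambda>\<tau>. Ft F (\<tau>, x + s *\<^sub>R e))"
        by (rule continuous_on_compose2[OF cFt]) (use t t1 inU[OF s] in \<open>auto intro!: continuous_intros\<close>)
      then show "(\<lambda>\<tau>. Ft F (\<tau>, x + s *\<^sub>R e)) integrable_on cbox 0 t"
        by (simp add: cbox_interval integrable_continuous_interval)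
    next
      have cp: "continuous_on (I \<times> cbox 0 t) (\<lambda>(s, \<tau>). (\<tau>, x + s *\<^sub>R e))"
        by (auto intro!: continuous_intros simp: split_beta)
      have "continuous_on (I \<times> cbox 0 t) (\<lambda>z. Ftx ((\<lambda>(s, \<tau>). (\<tau>, x + s *\<^sub>R e)) z))"
        by (rule continuous_on_compose2[OF cFtx cp sub])
      then show "continuous_on (I \<times> cbox 0 t) (\<lambda>(s, \<tau>). Ftx (\<tau>, x + s *\<^sub>R e))"
        by (simp add: split_beta)
    qed (use I0 cI in auto)
    then show ?thesis by (simp add: cbox_interval)
  qed
  have ident: "Fx a F (t, x) - Fx a F (0, x) = integral {0..t} (\<lambda>\<tau>. Ftx (\<tau>, x))" if t: "t \<in> {0..t1}" for t
  proof -
    have t': "t \<in> {0..<T}" using t t1 by auto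
    have d1: "((\<lambda>s. F (t, x + s *\<^sub>R e) - F (0, x + s *\<^sub>R e)) has_real_derivative Fx a F (t, x) - Fx a F (0, x)) (at 0)"
      unfolding e_def by (intro DERIV_diff Fx_line[OF F] t' x) (use T_pos in auto)
    have "((\<lambda>s. integral {0..t} (\<lambda>\<tau>. Ft F (\<tau>, x + s *\<^sub>R e))) has_real_derivative
      integral {0..t} (\<lambda>\<tau>. Ftx (\<tau>, x))) (at 0)"
      using leib[OF t] at_within_open[OF I0 oI] by simp
    then have d2: "((\<lambda>s. F (t, x + s *\<^sub>R e) - F (0, x + s *\<^sub>R e)) has_real_derivative
      integral {0..t} (\<lambda>\<tau>. Ftx (\<tau>, x))) (at 0)"
      by (rule has_field_derivative_transform_within_open[OF _ oI I0]) (use ftc t in auto)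
    show ?thesis using DERIV_unique[OF d1 d2] .
  qed
  have cont_t: "continuous_on {0..t1} (\<lambda>\<tau>. Ftx (\<tau>, x))"
    by (rule continuous_on_compose2[OF cFtx]) (use t1 x in \<open>auto intro!: continuous_intros\<close>)
  have "((\<lambda>t. Fx a F (0, x) + integral {0..t} (\<lambda>\<tau>. Ftx (\<tau>, x))) has_real_derivative Ftx (0, x)) (at 0 within {0..t1})"
    using integral_has_real_derivative[OF cont_t, of 0] t1 by (auto intro!: derivative_eq_intros)
  then have "((\<lambda>t. Fx a F (t, x)) has_real_derivative Ftx (0, x)) (at 0 within {0..t1})"
  proof (rule has_field_derivative_transform_within[OF _ t1(1)])
    show "0 \<in> {0..t1}" using t1 by simp
    fix y assume "y \<in> {0..t1}" "dist y 0 < t1"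
    then show "Fx a F (0, x) + integral {0..y} (\<lambda>\<tau>. Ftx (\<tau>, x)) = Fx a F (y, x)"
      using ident[of y] by simp
  qed
  moreover have "at 0 within {0..t1} = at (0::real) within {0..<T}"
    by (rule at_within_nhd[where S="{-1<..<t1}"]) (use t1 in auto)
  ultimately show ?thesis unfolding Ftx_def by simp
qed

end


lemma minv_props:
  fixes A :: "real^'n::finite^'n"
  assumes "det A \<noteq> 0"
  shows "A ** matrix_inv A = mat 1" "matrix_inv A ** A = mat 1"
proof -
  have "invertible A" using assms by (simp add: invertible_det_nz)
  then obtain B where "A ** B = mat 1 \<and> B ** A = mat 1" unfolding invertible_def by blast
  then have "A ** matrix_inv A = mat 1 \<and> matrix_inv A ** A = mat 1"
    unfolding matrix_inv_def by (rule someI)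
  then show "A ** matrix_inv A = mat 1" "matrix_inv A ** A = mat 1" by auto
qed

lemma minv_cramer:
  fixes A :: "real^'n::finite^'n"
  assumes d: "det A \<noteq> 0"
  shows "matrix_inv A $ k $ q = det (\<chi> i j. if j = k then (if i = q then 1 else 0) else A $ i $ j) / det A"
proof -
  let ?x = "matrix_inv A *v axis q 1"
  have "A *v ?x = axis q 1"
    by (simp add: matrix_vector_mul_assoc minv_props[OF d])
  then have "?x = (\<chi> k. det (\<chi> i j. if j = k then axis q 1 $ i else A $ i $ j) / det A)"
    using cramer[OF d] by blast
  then have "?x $ k = det (\<chi> i j. if j = k then axis q 1 $ i else A $ i $ j) / det A" by simp
  moreover have "?x $ k = matrix_inv A $ k $ q"
    by (simp add: matrix_vector_mult_def axis_def if_distrib cong: if_cong)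
  moreover have "(\<chi> i j. if j = k then axis q 1 $ i else A $ i $ j) = (\<chi> i j. if j = k then (if i = q then 1 else 0) else A $ i $ j)"
    by (simp add: vec_eq_iff axis_def)
  ultimately show ?thesis by simp
qed

lemma differentiable_prod_real:
  fixes f :: "'i \<Rightarrow> real \<Rightarrow> real"
  shows "finite I \<Longrightarrow> (\<And>i. i \<in> I \<Longrightarrow> f i differentiable (at x within S)) \<Longrightarrow>
    (\<lambda>x. \<Prod>i\<in>I. f i x) differentiable (at x within S)"
proof (induction I rule: finite_induct)
  case empty then show ?case by simp
next
  case (insert a I)
  then show ?case by (simp add: differentiable_mult)
qed

lemma det_differentiable:
  fixes M :: "real \<Rightarrow> real^'n::finite^'n"
  assumes "\<And>i j. (\<lambda>s. M s $ i $ j) differentiable (at s0 within X)"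
  shows "(\<lambda>s. det (M s)) differentiable (at s0 within X)"
  unfolding det_def
  by (intro differentiable_sum ballI differentiable_mult differentiable_const differentiable_prod_real assms)
     (auto simp: finite_permutations)

lemma minv_differentiable:
  fixes M :: "real \<Rightarrow> real^'n::finite^'n"
  assumes X: "s0 \<in> X" and nz: "\<And>s. s \<in> X \<Longrightarrow> det (M s) \<noteq> 0"
    and dM: "\<And>i j. (\<lambda>s. M s $ i $ j) differentiable (at s0 within X)"
  shows "\<exists>D. ((\<lambda>s. matrix_inv (M s) $ k $ q) has_real_derivative D) (at s0 within X)"
proof -
  let ?N = "\<lambda>s. (\<chi> i j. if j = k then (if i = q then 1 else 0) else M s $ i $ j) :: real^'n^'n"
  have dN: "(\<lambda>s. ?N s $ i $ j) differentiable (at s0 within X)" for i j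
    by (cases "j = k") (simp_all add: dM)
  have "(\<lambda>s. det (?N s) / det (M s)) differentiable (at s0 within X)"
    by (intro differentiable_divide det_differentiable dN dM nz X)
  then obtain D where D: "((\<lambda>s. det (?N s) / det (M s)) has_real_derivative D) (at s0 within X)"
    by (auto simp: real_differentiable_def)
  have "((\<lambda>s. matrix_inv (M s) $ k $ q) has_real_derivative D) (at s0 within X)"
    by (rule has_field_derivative_transform_within[OF D zero_less_one X])
       (simp add: minv_cramer[OF nz])
  then show ?thesis by blast
qed

lemma minv_deriv_value:
  fixes M :: "real \<Rightarrow> real^'n::finite^'n"
  assumes W: "open W" "s0 \<in> W" and nz: "\<And>s. s \<in> W \<Longrightarrow> det (M s) \<noteq> 0"
    and Md: "\<And>i j. ((\<lambda>s. M s $ i $ j) has_real_derivative Md i j) (at s0)"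
  shows "((\<lambda>s. matrix_inv (M s) $ m $ p) has_real_derivative
      (- (\<Sum>q\<in>UNIV. \<Sum>r\<in>UNIV. matrix_inv (M s0) $ m $ r * Md r q * matrix_inv (M s0) $ q $ p))) (at s0)"
proof -
  have atW: "at s0 within W = at s0" by (rule at_within_open[OF W(2,1)])
  have diff: "(\<lambda>s. M s $ i $ j) differentiable (at s0 within W)" for i j
    using Md[of i j] atW by (auto simp: real_differentiable_def)
  have "\<forall>m p. \<exists>D. ((\<lambda>s. matrix_inv (M s) $ m $ p) has_real_derivative D) (at s0)"
    using minv_differentiable[OF W(2) nz diff] atW by auto
  then obtain IVd where IVd: "\<And>m p. ((\<lambda>s. matrix_inv (M s) $ m $ p) has_real_derivative IVd m p) (at s0)"
    by metis
  let ?IV = "matrix_inv (M s0)" and ?M0 = "M s0"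
  have key: "(\<Sum>r\<in>UNIV. IVd m r * ?M0 $ r $ q) = - (\<Sum>r\<in>UNIV. ?IV $ m $ r * Md r q)" for m q
  proof -
    have d1: "((\<lambda>s. \<Sum>r\<in>UNIV. matrix_inv (M s) $ m $ r * M s $ r $ q) has_real_derivative
        (\<Sum>r\<in>UNIV. IVd m r * ?M0 $ r $ q + ?IV $ m $ r * Md r q)) (at s0)"
      apply (rule DERIV_sum)
      subgoal for r using DERIV_mult[OF IVd[of m r] Md[of r q]] by (simp add: algebra_simps)
      done
    have "((\<lambda>s. \<Sum>r\<in>UNIV. matrix_inv (M s) $ m $ r * M s $ r $ q) has_real_derivative 0) (at s0)"
    proof (rule has_field_derivative_transform_within_open[OF _ W(1,2)])
      show "((\<lambda>s. (if m = q then 1 else 0)) has_real_derivative 0) (at s0)" by simp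
      fix s assume "s \<in> W"
      then have "matrix_inv (M s) ** M s = mat 1" using minv_props nz by blast
      then have "(matrix_inv (M s) ** M s) $ m $ q = (if m = q then 1 else 0)" by (simp add: mat_def)
      then show "(if m = q then 1 else 0) = (\<Sum>r\<in>UNIV. matrix_inv (M s) $ m $ r * M s $ r $ q)"
        by (simp add: matrix_matrix_mult_def)
    qed
    from DERIV_unique[OF d1 this] show ?thesis by (simp add: sum.distrib eq_neg_iff_add_eq_0)
  qed
  have MI: "(\<Sum>q\<in>UNIV. ?M0 $ r $ q * ?IV $ q $ p) = (if r = p then 1 else 0)" for r
  proof -
    have "?M0 ** ?IV = mat 1" using minv_props nz W by blast
    then have "(?M0 ** ?IV) $ r $ p = (if r = p then 1 else 0)" by (simp add: mat_def)
    then show ?thesis by (simp add: matrix_matrix_mult_def)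
  qed
  have "IVd m p = (\<Sum>r\<in>UNIV. IVd m r * (if r = p then 1 else 0))"
    by (simp add: if_distrib cong: if_cong)
  also have "\<dots> = (\<Sum>r\<in>UNIV. \<Sum>q\<in>UNIV. IVd m r * ?M0 $ r $ q * ?IV $ q $ p)"
    by (simp add: MI[symmetric] sum_distrib_left mult.assoc)
  also have "\<dots> = (\<Sum>q\<in>UNIV. (\<Sum>r\<in>UNIV. IVd m r * ?M0 $ r $ q) * ?IV $ q $ p)"
    by (subst sum.swap) (simp add: sum_distrib_right)
  also have "\<dots> = - (\<Sum>q\<in>UNIV. \<Sum>r\<in>UNIV. ?IV $ m $ r * Md r q * ?IV $ q $ p)"
    by (simp add: key sum_distrib_right sum_negf)
  finally show ?thesis using IVd[of m p] by simp
qed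


definition BvF :: "('n \<Rightarrow> 'n \<Rightarrow> 'n \<Rightarrow> real) \<Rightarrow> 'n \<Rightarrow> 'n \<Rightarrow> 'n \<Rightarrow> real" where
  "BvF P j k q = P j k q + P k j q - P q j k"

definition dBF :: "('n \<Rightarrow> 'n \<Rightarrow> 'n \<Rightarrow> 'n \<Rightarrow> real) \<Rightarrow> 'n \<Rightarrow> 'n \<Rightarrow> 'n \<Rightarrow> 'n \<Rightarrow> real" where
  "dBF P2 b j k q = P2 b j k q + P2 b k j q - P2 b q j k"

definition dIVF :: "real^'n::finite^'n \<Rightarrow> ('n \<Rightarrow> 'n \<Rightarrow> 'n \<Rightarrow> real) \<Rightarrow> 'n \<Rightarrow> 'n \<Rightarrow> 'n \<Rightarrow> real" where
  "dIVF IV P b m p = - (\<Sum>q\<in>UNIV. \<Sum>r\<in>UNIV. IV $ m $ r * P b r q * IV $ q $ p)"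

definition GmF :: "real^'n::finite^'n \<Rightarrow> ('n \<Rightarrow> 'n \<Rightarrow> 'n \<Rightarrow> real) \<Rightarrow> 'n \<Rightarrow> 'n \<Rightarrow> 'n \<Rightarrow> real" where
  "GmF IV P m j k = 1/2 * (\<Sum>q\<in>UNIV. IV $ m $ q * BvF P j k q)"

definition dGmF :: "real^'n::finite^'n \<Rightarrow> ('n \<Rightarrow> 'n \<Rightarrow> 'n \<Rightarrow> real) \<Rightarrow> ('n \<Rightarrow> 'n \<Rightarrow> 'n \<Rightarrow> 'n \<Rightarrow> real)
    \<Rightarrow> 'n \<Rightarrow> 'n \<Rightarrow> 'n \<Rightarrow> 'n \<Rightarrow> real" where
  "dGmF IV P P2 b m j k = 1/2 * (\<Sum>q\<in>UNIV. dIVF IV P b m q * BvF P j k q + IV $ m $ q * dBF P2 b j k q)"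

definition RupF :: "real^'n::finite^'n \<Rightarrow> ('n \<Rightarrow> 'n \<Rightarrow> 'n \<Rightarrow> real) \<Rightarrow> ('n \<Rightarrow> 'n \<Rightarrow> 'n \<Rightarrow> 'n \<Rightarrow> real)
    \<Rightarrow> 'n \<Rightarrow> 'n \<Rightarrow> 'n \<Rightarrow> 'n \<Rightarrow> real" where
  "RupF IV P P2 i j k m = dGmF IV P P2 i m j k - dGmF IV P P2 j m i k
     + (\<Sum>p\<in>UNIV. GmF IV P p j k * GmF IV P m i p - GmF IV P p i k * GmF IV P m j p)"

definition RmF :: "real^'n::finite^'n \<Rightarrow> real^'n^'n \<Rightarrow> ('n \<Rightarrow> 'n \<Rightarrow> 'n \<Rightarrow> real) \<Rightarrow> ('n \<Rightarrow> 'n \<Rightarrow> 'n \<Rightarrow> 'n \<Rightarrow> real)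
    \<Rightarrow> 'n \<Rightarrow> 'n \<Rightarrow> 'n \<Rightarrow> 'n \<Rightarrow> real" where
  "RmF G0 IV P P2 i j k l = (\<Sum>m\<in>UNIV. G0 $ l $ m * RupF IV P P2 i j k m)"

lemma Rm_formula:
  fixes G :: "real^'n::finite \<Rightarrow> real^'n^'n"
  assumes V: "open V" "0 \<in> V"
    and nz: "\<And>y. y \<in> V \<Longrightarrow> det (G y) \<noteq> 0"
    and d1: "\<And>y a k l. y \<in> V \<Longrightarrow> ((\<lambda>s. G (y + s *\<^sub>R axis a 1) $ k $ l) has_real_derivative PP a k l y) (at 0)"
    and d2: "\<And>b a k l. ((\<lambda>s. PP a k l (s *\<^sub>R axis b 1)) has_real_derivative P2 b a k l) (at 0)"
  shows "Rm G i j k l 0 = RmF (G 0) (matrix_inv (G 0)) (\<lambda>a k l. PP a k l 0) P2 i j k l"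
proof -
  let ?IV = "matrix_inv (G 0)" and ?P = "\<lambda>a k l. PP a k l 0"
  have pdG: "pd a (\<lambda>z. G z $ k $ l) y = PP a k l y" if "y \<in> V" for y a k l
    by (rule pd_eqI_real[OF d1[OF that]])
  have Gam_V: "Gam G y m j k = 1/2 * (\<Sum>q\<in>UNIV. matrix_inv (G y) $ m $ q * (PP j k q y + PP k j q y - PP q j k y))"
    if "y \<in> V" for y m j k
    unfolding Gam_def using that by (simp add: pdG)
  have Gam0: "Gam G 0 m j k = GmF ?IV ?P m j k" for m j k
    using Gam_V[OF V(2)] by (simp add: GmF_def BvF_def)
  have pdGam: "pd b (\<lambda>y. Gam G y m j k) 0 = dGmF ?IV ?P P2 b m j k" for b m j k
  proof -
    let ?H = "\<lambda>y. 1/2 * (\<Sum>q\<in>UNIV. matrix_inv (G y) $ m $ q * (PP j k q y + PP k j q y - PP q j k y))"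
    have "pd b (\<lambda>y. Gam G y m j k) 0 = pd b ?H 0"
      by (rule pd_local[OF V]) (simp add: Gam_V)
    also have "\<dots> = dGmF ?IV ?P P2 b m j k"
    proof (rule pd_eqI_real)
      let ?W = "(\<lambda>s::real. s *\<^sub>R axis b 1) -` V"
      have oW: "open ?W" by (rule open_vimage[OF V(1)]) (auto intro!: continuous_intros)
      have W0: "0 \<in> ?W" using V by simp
      have inv_d: "((\<lambda>s. matrix_inv (G (s *\<^sub>R axis b 1)) $ m $ q) has_real_derivative dIVF ?IV ?P b m q) (at 0)"
        for q
      proof -
        have "((\<lambda>s. matrix_inv (G (s *\<^sub>R axis b 1)) $ m $ q) has_real_derivative
          (- (\<Sum>q'\<in>UNIV. \<Sum>r\<in>UNIV. matrix_inv (G (0 *\<^sub>R axis b 1)) $ m $ r * PP b r q' 0 *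
              matrix_inv (G (0 *\<^sub>R axis b 1)) $ q' $ q))) (at 0)"
          by (rule minv_deriv_value[OF oW W0]) (use nz d1[OF V(2)] in auto)
        then show ?thesis by (simp add: dIVF_def)
      qed
      have pp_d: "((\<lambda>s. PP a c d (s *\<^sub>R axis b 1)) has_real_derivative P2 b a c d) (at 0)" for a c d
        by (rule d2)
      have "((\<lambda>s. 1/2 * (\<Sum>q\<in>UNIV. matrix_inv (G (s *\<^sub>R axis b 1)) $ m $ q *
            (PP j k q (s *\<^sub>R axis b 1) + PP k j q (s *\<^sub>R axis b 1) - PP q j k (s *\<^sub>R axis b 1))))
          has_real_derivative 1/2 * (\<Sum>q\<in>UNIV. dIVF ?IV ?P b m q * BvF ?P j k q + ?IV $ m $ q * dBF P2 b j k q)) (at 0)"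
        apply (rule DERIV_cmult)
        apply (rule DERIV_sum)
        subgoal for q
          using DERIV_mult[OF inv_d[of q] DERIV_diff[OF DERIV_add[OF pp_d[of j k q] pp_d[of k j q]] pp_d[of q j k]]]
          by (simp add: BvF_def dBF_def algebra_simps)
        done
      then show "((\<lambda>s. ?H (0 + s *\<^sub>R axis b 1)) has_real_derivative dGmF ?IV ?P P2 b m j k) (at 0)"
        by (simp add: dGmF_def)
    qed
    finally show ?thesis .
  qed
  show ?thesis
    unfolding Rm_def RmF_def Rup_def RupF_def by (simp add: pdGam Gam0)
qed


lemma posdef_det_nz:
  fixes A :: "real^'n::finite^'n"
  assumes pd: "\<And>v. v \<noteq> 0 \<Longrightarrow> inner v (A *v v) > 0"
  shows "det A \<noteq> 0"
proof -
  have "inj ((*v) A)"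
  proof (rule injI)
    fix u w assume "A *v u = A *v w"
    then have "A *v (u - w) = 0" by (simp add: matrix_vector_mult_diff_distrib)
    then have "inner (u - w) (A *v (u - w)) = 0" by simp
    then show "u = w" using pd[of "u - w"] by (cases "u - w = 0") auto
  qed
  then obtain B where "B ** A = mat 1" using matrix_left_invertible_injective by blast
  then have "A ** B = mat 1" using matrix_left_right_inverse by blast
  then have "invertible A" unfolding invertible_def using \<open>B ** A = mat 1\<close> by blast
  then show ?thesis by (simp add: invertible_det_nz)
qed

lemma RmF_deriv:
  fixes G IV :: "real \<Rightarrow> real^'n::finite^'n" and P :: "real \<Rightarrow> 'n \<Rightarrow> 'n \<Rightarrow> 'n \<Rightarrow> real"
    and P2 :: "real \<Rightarrow> 'n \<Rightarrow> 'n \<Rightarrow> 'n \<Rightarrow> 'n \<Rightarrow> real"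
  assumes G: "\<And>a b. ((\<lambda>t. G t $ a $ b) has_real_derivative Gd a b) (at 0 within X)"
    and IV: "\<And>a b. ((\<lambda>t. IV t $ a $ b) has_real_derivative IVd a b) (at 0 within X)"
    and P: "\<And>a k l. ((\<lambda>t. P t a k l) has_real_derivative Pd a k l) (at 0 within X)"
    and P2: "\<And>b a k l. ((\<lambda>t. P2 t b a k l) has_real_derivative P2d b a k l) (at 0 within X)"
    and G0: "G 0 = mat 1" and IV0: "IV 0 = mat 1" and P0: "\<And>a k l. P 0 a k l = 0"
    and P20: "\<And>b a k l. P2 0 b a k l = 0"
  shows "((\<lambda>t. RmF (G t) (IV t) (P t) (P2 t) i j k l) has_real_derivative
      (1/2) * (dBF P2d i j k l - dBF P2d j i k l)) (at 0 within X)"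
proof -
  note atoms = G IV P P2
  have Gdf: "(\<lambda>t. G t $ a $ b) differentiable (at 0 within X)" for a b
    using G real_differentiable_def by blast
  have IVdf: "(\<lambda>t. IV t $ a $ b) differentiable (at 0 within X)" for a b
    using IV real_differentiable_def by blast
  have Pdf: "(\<lambda>t. P t a k l) differentiable (at 0 within X)" for a k l
    using P real_differentiable_def by blast
  have Bv: "((\<lambda>t. BvF (P t) j k q) has_real_derivative BvF Pd j k q) (at 0 within X)" for j k q
    unfolding BvF_def by (intro DERIV_add DERIV_diff P)
  have Bv0: "BvF (P 0) j k q = 0" for j k q by (simp add: BvF_def P0)
  have dB: "((\<lambda>t. dBF (P2 t) b j k q) has_real_derivative dBF P2d b j k q) (at 0 within X)" for b j k q
    unfolding dBF_def by (intro DERIV_add DERIV_diff P2)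
  have dB0: "dBF (P2 0) b j k q = 0" for b j k q by (simp add: dBF_def P20)
  have dIVdf: "(\<lambda>t. dIVF (IV t) (P t) b m q) differentiable (at 0 within X)" for b m q
    unfolding dIVF_def by (intro differentiable_minus differentiable_sum ballI differentiable_mult IVdf Pdf) auto
  have dIV0: "dIVF A (P 0) b m q = 0" for A b m q by (simp add: dIVF_def P0)
  have Gmdf: "(\<lambda>t. GmF (IV t) (P t) m j k) differentiable (at 0 within X)" for m j k
    unfolding GmF_def BvF_def
    by (intro differentiable_minus differentiable_sum ballI differentiable_mult differentiable_add
        differentiable_diff differentiable_const IVdf Pdf) auto
  have Gm0: "GmF A (P 0) m j k = 0" for A m j k by (simp add: GmF_def Bv0)
  have dGm: "((\<lambda>t. dGmF (IV t) (P t) (P2 t) b m j k) has_real_derivative (1/2) * dBF P2d b j k m) (at 0 within X)"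
    for b m j k
  proof -
    have "((\<lambda>t. dIVF (IV t) (P t) b m q * BvF (P t) j k q + IV t $ m $ q * dBF (P2 t) b j k q)
        has_real_derivative dBF P2d b j k q * (if m = q then 1 else 0)) (at 0 within X)" for q
    proof -
      obtain D where D: "((\<lambda>t. dIVF (IV t) (P t) b m q) has_real_derivative D) (at 0 within X)"
        using dIVdf[of b m q] real_differentiable_def by blast
      show ?thesis using DERIV_add[OF DERIV_mult[OF D Bv[of j k q]] DERIV_mult[OF IV[of m q] dB[of b j k q]]]
        by (simp add: Bv0 dB0 dIV0 IV0 mat_def)
    qed
    then have "((\<lambda>t. \<Sum>q\<in>UNIV. dIVF (IV t) (P t) b m q * BvF (P t) j k q + IV t $ m $ q * dBF (P2 t) b j k q)
        has_real_derivative (\<Sum>q\<in>UNIV. dBF P2d b j k q * (if m = q then 1 else 0))) (at 0 within X)"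
      by (intro DERIV_sum)
    moreover have "(\<Sum>q\<in>UNIV. dBF P2d b j k q * (if m = q then 1 else 0)) = dBF P2d b j k m"
      by (simp add: if_distrib cong: if_cong)
    ultimately show ?thesis unfolding dGmF_def by (intro DERIV_cmult) simp
  qed
  have dGm0: "dGmF A (P 0) (P2 0) b m j k = 0" for A b m j k by (simp add: dGmF_def dIV0 dB0)
  have GG: "((\<lambda>t. GmF (IV t) (P t) a b c * GmF (IV t) (P t) d e f) has_real_derivative 0) (at 0 within X)"
    for a b c d e f
  proof -
    obtain D1 where D1: "((\<lambda>t. GmF (IV t) (P t) a b c) has_real_derivative D1) (at 0 within X)"
      using Gmdf real_differentiable_def by blast
    obtain D2 where D2: "((\<lambda>t. GmF (IV t) (P t) d e f) has_real_derivative D2) (at 0 within X)"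
      using Gmdf real_differentiable_def by blast
    show ?thesis using DERIV_mult[OF D1 D2] by (simp add: Gm0 del: GmF_def)
  qed
  have Rup: "((\<lambda>t. RupF (IV t) (P t) (P2 t) i j k m) has_real_derivative
      (1/2) * dBF P2d i j k m - (1/2) * dBF P2d j i k m) (at 0 within X)" for m
  proof -
    have "((\<lambda>t. \<Sum>p\<in>UNIV. GmF (IV t) (P t) p j k * GmF (IV t) (P t) m i p - GmF (IV t) (P t) p i k * GmF (IV t) (P t) m j p)
        has_real_derivative (\<Sum>p\<in>(UNIV::'n set). 0 - 0)) (at 0 within X)"
    proof (rule DERIV_sum[of UNIV "\<lambda>t p. GmF (IV t) (P t) p j k * GmF (IV t) (P t) m i p - GmF (IV t) (P t) p i k * GmF (IV t) (P t) m j p"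
          "\<lambda>p. 0 - 0" "at 0 within X"])
      fix p :: 'n
      show "((\<lambda>t. GmF (IV t) (P t) p j k * GmF (IV t) (P t) m i p - GmF (IV t) (P t) p i k * GmF (IV t) (P t) m j p)
         has_real_derivative 0 - 0) (at 0 within X)"
        by (rule DERIV_diff[OF GG GG])
    qed
    note S = this
    show ?thesis unfolding RupF_def using DERIV_add[OF DERIV_diff[OF dGm[of i m j k] dGm[of j m i k]] S] by simp
  qed
  have Rup0: "RupF A (P 0) (P2 0) i j k m = 0" for A m by (simp add: RupF_def dGm0 Gm0)
  have "((\<lambda>t. G t $ l $ m * RupF (IV t) (P t) (P2 t) i j k m) has_real_derivative
      ((1/2) * dBF P2d i j k m - (1/2) * dBF P2d j i k m) * (if l = m then 1 else 0)) (at 0 within X)" for m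
    using DERIV_mult[OF G[of l m] Rup[of m]] by (simp add: Rup0 G0 mat_def)
  then have "((\<lambda>t. \<Sum>m\<in>UNIV. G t $ l $ m * RupF (IV t) (P t) (P2 t) i j k m) has_real_derivative
      (\<Sum>m\<in>UNIV. ((1/2) * dBF P2d i j k m - (1/2) * dBF P2d j i k m) * (if l = m then 1 else 0))) (at 0 within X)"
    by (intro DERIV_sum)
  moreover have "(\<Sum>m\<in>UNIV. ((1/2) * dBF P2d i j k m - (1/2) * dBF P2d j i k m) * (if l = m then 1 else 0))
      = (1/2) * (dBF P2d i j k l - dBF P2d j i k l)"
    by (simp add: if_distrib algebra_simps cong: if_cong)
  ultimately show ?thesis unfolding RmF_def by metis
qed


lemma Gam_local:
  assumes "open V" "y \<in> V" "\<And>z. z \<in> V \<Longrightarrow> G z = G' z"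
  shows "Gam G y m i j = Gam G' y m i j"
proof -
  have "pd a (\<lambda>z. G z $ b $ c) y = pd a (\<lambda>z. G' z $ b $ c) y" for a b c
    by (rule pd_local[OF assms(1,2)]) (simp add: assms(3))
  then show ?thesis unfolding Gam_def using assms(2,3) by simp
qed

lemma Rup_local:
  assumes "open V" "x \<in> V" "\<And>z. z \<in> V \<Longrightarrow> G z = G' z"
  shows "Rup G x i j k m = Rup G' x i j k m"
proof -
  have "pd a (\<lambda>y. Gam G y p q r) x = pd a (\<lambda>y. Gam G' y p q r) x" for a p q r
    by (rule pd_local[OF assms(1,2)]) (rule Gam_local[OF assms(1) _ assms(3)])
  moreover have "Gam G x p q r = Gam G' x p q r" for p q r by (rule Gam_local[OF assms])
  ultimately show ?thesis unfolding Rup_def by simp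
qed

lemma Ric_local:
  assumes "open V" "x \<in> V" "\<And>z. z \<in> V \<Longrightarrow> G z = G' z"
  shows "Ric G x j k = Ric G' x j k"
  unfolding Ric_def using Rup_local[OF assms] by simp

lemma Rm_local:
  assumes "open V" "x \<in> V" "\<And>z. z \<in> V \<Longrightarrow> G z = G' z"
  shows "Rm G i j k l x = Rm G' i j k l x"
  unfolding Rm_def using Rup_local[OF assms] assms(2,3) by simp

lemma dR_dBF: "dR i j k l = (1/2) * (dBF Dd i j k l - dBF Dd j i k l)"
  unfolding dR_def dBF_def by simp

theorem mainTheorem2:
  fixes T :: real and U :: "(real^('n::{finite,linorder})) set"
    and g :: "real \<Rightarrow> real^('n::{finite,linorder}) \<Rightarrow> real^('n::{finite,linorder})^('n::{finite,linorder})"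
  assumes "card (UNIV :: 'n set) \<ge> 2"
    and "T > 0" and "open U" and "0 \<in> U"
    and "ricci_flow_solution T U g (induced_metric fgraph)"
  shows "g 0 0 = mat 1
    \<and> (\<forall>i j k l. Rm (g 0) i j k l 0 = 0)
    \<and> (\<forall>i j k l. {i, j} \<noteq> {k, l} \<longrightarrow>
          ((\<lambda>t. Rm (g t) i j k l 0) has_real_derivative 0) (at 0 within {0..<T}))
    \<and> (\<forall>i j. pos i < pos j \<longrightarrow>
          ((\<lambda>t. Rm (g t) i j i j 0) has_real_derivative
              (-8 * (real (card (UNIV :: 'n set)) - real (pos j) + 2))) (at 0 within {0..<T})
          \<and> -8 * (real (card (UNIV :: 'n set)) - real (pos j) + 2) < 0)
    \<and> (\<exists>i j k l D. ((\<lambda>t. Rm (g t) i j k l 0) has_real_derivative D) (at 0 within {0..<T})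
          \<and> D \<noteq> 0)"
proof -
  note rf = assms(5)[unfolded ricci_flow_solution_def]
  have smg: "\<And>i j. smooth_on ({0..<T} \<times> U) (\<lambda>(t,x). g t x $ i $ j)" using rf by blast
  have pdef: "\<And>t x v. t \<in> {0..<T} \<Longrightarrow> x \<in> U \<Longrightarrow> v \<noteq> 0 \<Longrightarrow> inner v (g t x *v v) > 0"
    using rf by blast
  have init: "\<And>x. x \<in> U \<Longrightarrow> g 0 x = g0 x" using rf by blast
  have flow: "\<And>t x i j. t \<in> {0..<T} \<Longrightarrow> x \<in> U \<Longrightarrow>
      ((\<lambda>s. g s x $ i $ j) has_real_derivative (-2 * Ric (g t) x i j)) (at t within {0..<T})"
    using rf by blast
  interpret strip T U using assms(2,3) by unfold_locales
  have U0: "0 \<in> U" by (rule assms(4))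
  have T0: "(0::real) \<in> {0..<T}" using assms(2) by simp
  define GG where "GG i j = (\<lambda>(t::real, x::real^('n::{finite,linorder})). g t x $ i $ j)" for i j
  have smG: "smooth_on Sd (GG i j)" for i j unfolding GG_def by (rule smg)
  have nz: "det (g t x) \<noteq> 0" if "t \<in> {0..<T}" "x \<in> U" for t x
    by (rule posdef_det_nz) (rule pdef[OF that])
  have g00: "g 0 0 = mat 1"
    using init[OF U0] by (simp add: vec_eq_iff mat_def g0_entry)
  have Rm0: "Rm (g 0) i j k l 0 = 0" for i j k l
    using Rm_local[OF U_open U0 init] Rm_g0_0 by simp
  define P where "P t a k l = Fx a (GG k l) (t, 0)" for t a k l
  define P2 where "P2 t b a k l = Fx b (Fx a (GG k l)) (t, 0)" for t b a k l
  have Rm_t: "Rm (g t) i j k l 0 = RmF (g t 0) (matrix_inv (g t 0)) (P t) (P2 t) i j k l"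
    if t: "t \<in> {0..<T}" for t i j k l
  proof -
    have "Rm (g t) i j k l 0 = RmF (g t 0) (matrix_inv (g t 0)) (\<lambda>a k l. Fx a (GG k l) (t, 0))
       (\<lambda>b a k l. Fx b (Fx a (GG k l)) (t, 0)) i j k l"
    proof (rule Rm_formula[OF U_open U0])
      fix y assume "y \<in> U" then show "det (g t y) \<noteq> 0" using nz t by blast
    next
      fix y a k l assume y: "y \<in> U"
      show "((\<lambda>s. g t (y + s *\<^sub>R axis a 1) $ k $ l) has_real_derivative Fx a (GG k l) (t, y)) (at 0)"
        using Fx_line[OF smG[of k l] t y, of a] by (simp add: GG_def)
    next
      fix b a k l
      show "((\<lambda>s. Fx a (GG k l) (t, s *\<^sub>R axis b 1)) has_real_derivative Fx b (Fx a (GG k l)) (t, 0)) (at 0)"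
        using Fx_line[OF smooth_Fx[OF smG[of k l], of a] t U0, of b] by simp
    qed
    then show ?thesis unfolding P_def P2_def .
  qed
  have dG: "((\<lambda>t. g t 0 $ a $ b) has_real_derivative Ft (GG a b) (0, 0)) (at 0 within {0..<T})" for a b
    using Ft_line[OF smG[of a b] T0 U0] by (simp add: GG_def)
  have "\<forall>a b. \<exists>D. ((\<lambda>t. matrix_inv (g t 0) $ a $ b) has_real_derivative D) (at 0 within {0..<T})"
  proof (intro allI)
    fix a b
    show "\<exists>D. ((\<lambda>t. matrix_inv (g t 0) $ a $ b) has_real_derivative D) (at 0 within {0..<T})"
    proof (rule minv_differentiable[OF T0])
      fix s :: real assume "s \<in> {0..<T}" then show "det (g s 0) \<noteq> 0" using nz U0 by blast
    next
      fix i j show "(\<lambda>s. g s 0 $ i $ j) differentiable (at 0 within {0..<T})"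
        using dG[of i j] by (auto simp: real_differentiable_def)
    qed
  qed
  then obtain IVd where dIV: "\<And>a b. ((\<lambda>t. matrix_inv (g t 0) $ a $ b) has_real_derivative IVd a b) (at 0 within {0..<T})"
    by metis
  have dP: "((\<lambda>t. P t a k l) has_real_derivative Ft (Fx a (GG k l)) (0, 0)) (at 0 within {0..<T})" for a k l
    unfolding P_def by (rule Ft_line[OF smooth_Fx[OF smG] T0 U0])
  have dP2: "((\<lambda>t. P2 t b a k l) has_real_derivative Fx b (Ft (Fx a (GG k l))) (0, 0)) (at 0 within {0..<T})"
    for b a k l unfolding P2_def by (rule commute[OF smooth_Fx[OF smG] U0])
  have IV0: "matrix_inv (g 0 0) = mat 1"
    unfolding g00 by (rule matrix_inv_unique) simp_all
  have pdg0: "Fx a (GG k l) (0, y) = pd a (qq k l) y" if y: "y \<in> U" for a k l y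
  proof -
    have "Fx a (GG k l) (0, y) = pd a (\<lambda>z. GG k l (0, z)) y" by (rule pd_Fx[OF smG T0 y, symmetric])
    also have "\<dots> = pd a (\<lambda>z. g0 z $ k $ l) y"
      by (rule pd_local[OF U_open y]) (simp add: GG_def init)
    also have "\<dots> = pd a (qq k l) y" by (rule pd_g0)
    finally show ?thesis .
  qed
  have P0: "P 0 a k l = 0" for a k l
    unfolding P_def pdg0[OF U0] using van_qq[of k l, unfolded van_def, rule_format, of "[a]"] by simp
  have P20: "P2 0 b a k l = 0" for b a k l
  proof -
    have "P2 0 b a k l = pd b (\<lambda>y. Fx a (GG k l) (0, y)) 0"
      unfolding P2_def by (rule pd_Fx[OF smooth_Fx[OF smG] T0 U0, symmetric])
    also have "\<dots> = pd b (pd a (qq k l)) 0"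
      by (rule pd_local[OF U_open U0]) (simp add: pdg0)
    also have "\<dots> = 0" using van_qq[of k l, unfolded van_def, rule_format, of "[a,b]"] by simp
    finally show ?thesis .
  qed
  have Ftg: "Ft (GG k l) (0, z) = - 2 * Ricf k l z" if z: "z \<in> U" for k l z
  proof -
    have "Ft (GG k l) (0, z) = -2 * Ric (g 0) z k l"
      by (rule deriv_unique_Ico[OF _ flow[OF T0 z] T0]) (use Ft_line[OF smG[of k l] T0 z] in \<open>simp add: GG_def\<close>)
    also have "Ric (g 0) z k l = Ric g0 z k l" by (rule Ric_local[OF U_open z init])
    finally show ?thesis by (simp add: Ric_g0)
  qed
  have FtFx: "Ft (Fx a (GG k l)) (0, y) = -2 * pd a (Ricf k l) y" if y: "y \<in> U" for a k l y
  proof -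
    have "Ft (Fx a (GG k l)) (0, y) = Fx a (Ft (GG k l)) (0, y)"
      by (rule deriv_unique_Ico[OF Ft_line[OF smooth_Fx[OF smG] T0 y] commute[OF smG y] T0])
    also have "\<dots> = pd a (\<lambda>z. Ft (GG k l) (0, z)) y" by (rule pd_Fx[OF smooth_Ft[OF smG] T0 y, symmetric])
    also have "\<dots> = pd a (\<lambda>z. - 2 * Ricf k l z) y"
      by (rule pd_local[OF U_open y]) (simp add: Ftg)
    also have "\<dots> = -2 * pd a (Ricf k l) y"
      by (subst pd_mult) (auto simp: pd_const)
    finally show ?thesis .
  qed
  have P2d: "Fx b (Ft (Fx a (GG k l))) (0, 0) = Dd b a k l" for b a k l
  proof -
    have "Fx b (Ft (Fx a (GG k l))) (0, 0) = pd b (\<lambda>y. Ft (Fx a (GG k l)) (0, y)) 0"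
      by (rule pd_Fx[OF smooth_Ft[OF smooth_Fx[OF smG]] T0 U0, symmetric])
    also have "\<dots> = pd b (\<lambda>y. -2 * pd a (Ricf k l) y) 0"
      by (rule pd_local[OF U_open U0]) (simp add: FtFx)
    also have "\<dots> = -2 * pd b (pd a (Ricf k l)) 0"
      by (subst pd_mult) (auto simp: pd_const)
    finally show ?thesis by (simp add: Dd_def)
  qed
  have dRm: "((\<lambda>t. Rm (g t) i j k l 0) has_real_derivative dR i j k l) (at 0 within {0..<T})" for i j k l
  proof -
    have "((\<lambda>t. RmF (g t 0) (matrix_inv (g t 0)) (P t) (P2 t) i j k l) has_real_derivative
      (1/2) * (dBF (\<lambda>b a k l. Fx b (Ft (Fx a (GG k l))) (0, 0)) i j k l
             - dBF (\<lambda>b a k l. Fx b (Ft (Fx a (GG k l))) (0, 0)) j i k l)) (at 0 within {0..<T})"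
      by (rule RmF_deriv[OF dG dIV dP dP2 g00 IV0 P0 P20])
    then have "((\<lambda>t. RmF (g t 0) (matrix_inv (g t 0)) (P t) (P2 t) i j k l) has_real_derivative dR i j k l)
      (at 0 within {0..<T})"
      by (simp add: P2d dR_dBF)
    then show ?thesis
      by (rule has_field_derivative_transform_within[OF _ zero_less_one T0]) (simp add: Rm_t)
  qed
  have c3: "((\<lambda>t. Rm (g t) i j k l 0) has_real_derivative 0) (at 0 within {0..<T})"
    if "{i, j} \<noteq> {k, l}" for i j k l
    using dRm[of i j k l] by (simp add: dR_SS SS_zero[OF that])
  have c4: "((\<lambda>t. Rm (g t) i j i j 0) has_real_derivative
        (-8 * (real (card (UNIV :: 'n set)) - real (pos j) + 2))) (at 0 within {0..<T})
      \<and> -8 * (real (card (UNIV :: 'n set)) - real (pos j) + 2) < 0" if "pos i < pos j" for i j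
  proof
    have ij: "i < j" using that by (simp add: pos_less_iff)
    have "dR i j i j = -8 * (real (card (UNIV :: 'n set)) - real (pos j) + 2)"
      by (simp add: dR_SS SS_ij[OF ij] algebra_simps)
    then show "((\<lambda>t. Rm (g t) i j i j 0) has_real_derivative
        (-8 * (real (card (UNIV :: 'n set)) - real (pos j) + 2))) (at 0 within {0..<T})"
      using dRm[of i j i j] by simp
    show "-8 * (real (card (UNIV :: 'n set)) - real (pos j) + 2) < 0"
      using pos_le_card[of j] by simp
  qed
  have c5: "\<exists>i j k l D. ((\<lambda>t. Rm (g t) i j k l 0) has_real_derivative D) (at 0 within {0..<T}) \<and> D \<noteq> 0"
  proof -
    have "\<exists>i j::'n. i \<noteq> j"
    proof (rule ccontr)
      assume "\<not> (\<exists>i j::'n. i \<noteq> j)"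
      then have "card (UNIV::'n set) \<le> Suc 0" using card_le_Suc0_iff_eq[of "UNIV::'n set"] by auto
      then show False using assms(1) by simp
    qed
    then obtain i0 j0 :: 'n where "i0 \<noteq> j0" by blast
    then have "i0 < j0 \<or> j0 < i0" by auto
    then obtain i j :: 'n where ij: "i < j" by blast
    then have "pos i < pos j" by (simp add: pos_less_iff)
    from c4[OF this] show ?thesis by (intro exI conjI) auto
  qed
  show ?thesis using g00 Rm0 c3 c4 c5 by blast
qed


end
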